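(* If $\mathsf{A}=(A_1,\dots,A_N)\in GL_2(\mathbb{R})^N$ is dominated, then the closure of $\{cA_{\mathtt{i}}: c\in\mathbb{R},\ \mathtt{i}\in\Sigma_*\}$ in the space of $2\times2$ matrices contains no non-zero nilpotent matrix. Equivalently, every rank-one matrix in this closure is a non-zero scalar multiple of a (not necessarily orthogonal) projection, i.e. of a rank-one idempotent.
   Context: For a finite word $\mathtt{i}=i_1\cdots i_n$, $A_{\mathtt{i}}=A_{i_1}\cdots A_{i_n}$ and $|\mathtt{i}|=n$; $\Sigma_*$ is the set of all finite words. $\alpha_1(A)\ge\alpha_2(A)$ are singular values. $\mathsf{A}$ is dominated if there are $C>0$ and $0<\tau<1$ with $\alpha_2(A_{\mathtt{i}})\le C\tau^{|\mathtt{i}|}\alpha_1(A_{\mathtt{i}})$ for all $\mathtt{i}\in\Sigma_*$. *)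

theory Defs
  imports "HOL-Analysis.Analysis"
begin

definition word_prod :: "('n \<Rightarrow> real^'d^'d) \<Rightarrow> 'n list \<Rightarrow> real^'d^'d" where
  "word_prod A w = foldr (\<lambda>j M. A j ** M) w (mat 1)"

definition gram_eigenvalues :: "real^'d^'d \<Rightarrow> real set" where
  "gram_eigenvalues A = {e. \<exists>v. v \<noteq> 0 \<and> (transpose A ** A) *v v = e *\<^sub>R v}"

definition sv1 :: "real^2^2 \<Rightarrow> real" where
  "sv1 A = sqrt (Max (gram_eigenvalues A))"

definition sv2 :: "real^2^2 \<Rightarrow> real" where
  "sv2 A = sqrt (Min (gram_eigenvalues A))"

definition dominated :: "('n \<Rightarrow> real^2^2) \<Rightarrow> bool" where
  "dominated A \<longleftrightarrow> (\<exists>C>0. \<exists>\<tau>. 0 < \<tau> \<and> \<tau> < 1 \<and>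
     (\<forall>w. sv2 (word_prod A w) \<le> C * \<tau> ^ length w * sv1 (word_prod A w)))"

definition mat_pow :: "real^'d^'d \<Rightarrow> nat \<Rightarrow> real^'d^'d" where
  "mat_pow M k = (((**) M) ^^ k) (mat 1)"

definition nilpotent_mat :: "real^'d^'d \<Rightarrow> bool" where
  "nilpotent_mat M \<longleftrightarrow> (\<exists>k. mat_pow M k = 0)"

end

theory Submission
  imports Defs
begin

lemma norm2_sq: "(norm (x::real^2))^2 = (x$1)^2 + (x$2)^2"
  by (simp add: norm_vec_def L2_set_def UNIV_2 power2_eq_square)
lemma inner2: "inner (x::real^2) y = x$1*y$1 + x$2*y$2"
  by (simp add: inner_vec_def UNIV_2)
lemma mv2: "(G::real^2^2) *v x = (\<chi> i. G$i$1 * x$1 + G$i$2 * x$2)"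
  by (simp add: matrix_vector_mult_def sum_2)
lemma mm2: "(G::real^2^2) ** H = (\<chi> i j. G$i$1 * H$1$j + G$i$2 * H$2$j)"
  by (simp add: matrix_matrix_mult_def sum_2)
lemma vec2_eq: "(x::'a^2) = y \<longleftrightarrow> x$1 = y$1 \<and> x$2 = y$2"
  by (simp add: vec_eq_iff forall_2)

definition perp :: "real^2 \<Rightarrow> real^2" where
  "perp x = (\<chi> i. if i = 1 then - x$2 else x$1)"

lemma perp1[simp]: "perp x $ 1 = - x$2" and perp2[simp]: "perp x $ 2 = x$1"
  by (simp_all add: perp_def)

lemma inner_perp_self[simp]: "inner x (perp x) = 0" "inner (perp x) x = 0"
  by (simp_all add: inner2 algebra_simps)

lemma norm_perp[simp]: "norm (perp x) = norm x"
proof -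
  have "(norm (perp x))^2 = (norm x)^2" by (simp add: norm2_sq algebra_simps)
  thus ?thesis by (simp add: power2_eq_iff_nonneg)
qed

lemma decomp:
  assumes "norm s = 1"
  shows "x = inner x s *\<^sub>R s + inner x (perp s) *\<^sub>R perp s"
proof -
  have n: "(s$1)^2 + (s$2)^2 = 1" using assms norm2_sq[of s] by simp
  show ?thesis unfolding vec2_eq
    using n by (simp add: inner2 power2_eq_square) algebra
qed

definition dd :: "real^2 \<Rightarrow> real^2 \<Rightarrow> real" where
  "dd a b = \<bar>inner a (perp b)\<bar>"

lemma dd_sym: "dd a b = dd b a"
  by (simp add: dd_def inner2 algebra_simps abs_minus_commute)

lemma dd_nonneg: "0 \<le> dd a b" by (simp add: dd_def)

lemma dd_tri:
  assumes a: "norm a = 1" and b: "norm b = 1" and c: "norm c = 1"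
  shows "dd a c \<le> dd a b + dd b c"
proof -
  have nb: "(b$1)^2 + (b$2)^2 = 1" using b norm2_sq[of b] by simp
  have id: "inner a (perp c) = inner a b * inner b (perp c) + inner a (perp b) * inner b c"
    using nb by (simp add: inner2 power2_eq_square) algebra
  have ab: "\<bar>inner a b\<bar> \<le> 1" using Cauchy_Schwarz_ineq2[of a b] a b by simp
  moreover have bc: "\<bar>inner b c\<bar> \<le> 1" using Cauchy_Schwarz_ineq2[of b c] b c by simp
  ultimately have "\<bar>inner a (perp c)\<bar> \<le> \<bar>inner b (perp c)\<bar> + \<bar>inner a (perp b)\<bar>"
  proof -
    have "\<bar>inner a (perp c)\<bar> \<le> \<bar>inner a b\<bar> * \<bar>inner b (perp c)\<bar> + \<bar>inner a (perp b)\<bar> * \<bar>inner b c\<bar>"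
      unfolding id by (metis abs_mult abs_triangle_ineq)
    also have "\<dots> \<le> 1 * \<bar>inner b (perp c)\<bar> + \<bar>inner a (perp b)\<bar> * 1"
      by (intro add_mono mult_mono) (use ab bc in auto)
    finally show ?thesis by simp
  qed
  thus ?thesis by (simp add: dd_def)
qed

lemma wk_exists: "\<exists>s::real^2. norm s = 1 \<and> (\<forall>x. norm x = 1 \<longrightarrow> norm (G *v s) \<le> norm (G *v x))"
proof -
  have c: "continuous_on (sphere (0::real^2) 1) (\<lambda>x. norm (G *v x))"
    by (intro continuous_on_norm linear_continuous_on matrix_vector_mul_bounded_linear)
  have ne: "sphere (0::real^2) 1 \<noteq> {}" by simp
  from continuous_attains_inf[OF compact_sphere ne c] show ?thesis by auto
qed

definition wk :: "real^2^2 \<Rightarrow> real^2" where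
  "wk G = (SOME s. norm s = 1 \<and> (\<forall>x. norm x = 1 \<longrightarrow> norm (G *v s) \<le> norm (G *v x)))"

lemma wk: "norm (wk G) = 1" "norm x = 1 \<Longrightarrow> norm (G *v wk G) \<le> norm (G *v x)"
  using someI_ex[OF wk_exists[of G]] unfolding wk_def[symmetric] by auto

lemma wk_inner: "inner (wk G) (wk G) = 1" "inner (perp (wk G)) (perp (wk G)) = 1"
  using wk(1)[of G] norm_perp[of "wk G"] by (simp_all add: dot_square_norm)

definition s2 :: "real^2^2 \<Rightarrow> real" where "s2 G = norm (G *v wk G)"
definition s1 :: "real^2^2 \<Rightarrow> real" where "s1 G = norm (G *v perp (wk G))"

lemma s2_le: "s2 G * norm x \<le> norm (G *v x)"
proof (cases "x = 0")
  case False
  let ?y = "(1/norm x) *\<^sub>R x"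
  have "norm ?y = 1" using False by simp
  hence "s2 G \<le> norm (G *v ?y)" using wk(2) s2_def by metis
  also have "\<dots> = norm (G *v x) / norm x" by (simp add: matrix_vector_mult_scaleR)
  finally show ?thesis using False by (simp add: pos_le_divide_eq)
qed (simp add: s2_def)

lemma s2_nonneg: "0 \<le> s2 G" by (simp add: s2_def)
lemma s1_nonneg: "0 \<le> s1 G" by (simp add: s1_def)

lemma quad_aux: fixes a b c :: real assumes "c > 0"
  shows "2 * (-b/c) * b + (-b/c)^2 * a = - ((b*b)/c) * (2 - a/c)"
  using assms by (simp add: field_simps power2_eq_square)

lemma div_abs_lt1: "(a::real) / (\<bar>a\<bar> + 1) < 1"
proof -
  have p: "0 < \<bar>a\<bar> + 1" by simp
  have "a < \<bar>a\<bar> + 1" by simp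
  thus ?thesis using p by (simp only: divide_less_eq_1_pos)
qed

lemma neg_aux: fixes b c d :: real assumes "b \<noteq> 0" "c > 0" "d < 1"
  shows "- ((b*b)/c) * (2 - d) < 0"
proof -
  have "b * b > 0" using assms(1) by (metis not_real_square_gt_zero)
  hence "(b*b)/c > 0" using assms(2) by (rule divide_pos_pos)
  moreover have "2 - d > 0" using assms(3) by linarith
  ultimately have "(b*b)/c * (2 - d) > 0" by (rule mult_pos_pos)
  thus ?thesis by linarith
qed

lemma orth: "inner (G *v wk G) (G *v perp (wk G)) = 0"
proof -
  let ?s = "wk G" let ?p = "perp (wk G)"
  let ?b = "inner (G *v ?s) (G *v ?p)" let ?a = "(norm (G *v ?p))^2 - (s2 G)^2"
  have ns: "norm ?s = 1" by (rule wk)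
  have key: "0 \<le> 2 * t * ?b + t^2 * ?a" for t
  proof -
    have n2: "(norm (?s + t *\<^sub>R ?p))^2 = 1 + t^2"
      unfolding power2_norm_eq_inner by (simp add: inner_add_left inner_add_right wk_inner inner_commute power2_eq_square)
    have "(s2 G * norm (?s + t *\<^sub>R ?p))^2 \<le> (norm (G *v (?s + t *\<^sub>R ?p)))^2"
      using s2_le[of G] s2_nonneg by (intro power_mono) auto
    moreover have "(norm (G *v (?s + t *\<^sub>R ?p)))^2 = (s2 G)^2 + 2 * t * ?b + t^2 * (norm (G *v ?p))^2"
      unfolding s2_def power2_norm_eq_inner
      by (simp add: matrix_vector_right_distrib matrix_vector_mult_scaleR
          inner_add_left inner_add_right inner_commute algebra_simps power2_eq_square)
    ultimately show ?thesis unfolding power_mult_distrib n2 by (simp add: algebra_simps)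
  qed
  show ?thesis
  proof (rule ccontr)
    assume b: "?b \<noteq> 0"
    define t where "t = - ?b / (\<bar>?a\<bar> + 1)"
    have pos: "\<bar>?a\<bar> + 1 > 0" by simp
    have "2 * t * ?b + t^2 * ?a = - ((?b * ?b) / (\<bar>?a\<bar> + 1)) * (2 - ?a / (\<bar>?a\<bar> + 1))"
      unfolding t_def by (rule quad_aux[OF pos])
    moreover have "?a / (\<bar>?a\<bar> + 1) < 1" by (rule div_abs_lt1)
    ultimately have "2 * t * ?b + t^2 * ?a < 0" using neg_aux[OF b pos] by simp
    with key[of t] show False by simp
  qed
qed

lemma norm_sq_formula:
  "(norm (G *v x))^2 = (inner x (wk G))^2 * (s2 G)^2 + (inner x (perp (wk G)))^2 * (s1 G)^2"
proof -
  let ?s = "wk G" let ?p = "perp (wk G)"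
  have "G *v x = inner x ?s *\<^sub>R (G *v ?s) + inner x ?p *\<^sub>R (G *v ?p)"
    by (subst decomp[OF wk(1), of x]) (simp add: matrix_vector_right_distrib matrix_vector_mult_scaleR)
  hence "(norm (G *v x))^2 = inner (inner x ?s *\<^sub>R (G *v ?s) + inner x ?p *\<^sub>R (G *v ?p)) (inner x ?s *\<^sub>R (G *v ?s) + inner x ?p *\<^sub>R (G *v ?p))"
    by (simp add: power2_norm_eq_inner)
  also have "\<dots> = (inner x ?s)^2 * (s2 G)^2 + (inner x ?p)^2 * (s1 G)^2"
    unfolding s1_def s2_def power2_norm_eq_inner
    using orth[of G] by (simp add: inner_add_left inner_add_right inner_commute power2_eq_square algebra_simps)
  finally show ?thesis .
qed

lemma s2_le_s1: "s2 G \<le> s1 G"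
  using wk(2)[of "perp (wk G)" G] wk(1) by (simp add: s1_def s2_def)

lemma unit_sq: "norm x = 1 \<Longrightarrow> (inner x (wk G))^2 + (inner x (perp (wk G)))^2 = 1"
proof -
  assume "norm x = 1"
  moreover have "(norm x)^2 = (inner x (wk G))^2 + (inner x (perp (wk G)))^2"
    apply (simp only: power2_norm_eq_inner)
    apply (subst (1 2) decomp[OF wk(1)[of G], of x])
    by (simp add: inner_add_left inner_add_right inner_commute power2_eq_square algebra_simps wk_inner)
  ultimately show ?thesis by simp
qed

lemma s1_ge: "norm x = 1 \<Longrightarrow> norm (G *v x) \<le> s1 G"
proof -
  assume x: "norm x = 1"
  have "(norm (G *v x))^2 \<le> (s1 G)^2"
  proof -
    let ?a = "(inner x (wk G))^2" let ?b = "(inner x (perp (wk G)))^2"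
    have "(s2 G)^2 \<le> (s1 G)^2" using s2_le_s1[of G] s2_nonneg[of G] by (rule power_mono)
    hence "?a * (s2 G)^2 \<le> ?a * (s1 G)^2" by (rule mult_left_mono) simp
    moreover have "?a * (s1 G)^2 + ?b * (s1 G)^2 = (s1 G)^2" using unit_sq[OF x, of G] by (metis distrib_right mult_1_left)
    ultimately show ?thesis unfolding norm_sq_formula by linarith
  qed
  thus ?thesis using s1_nonneg by (rule power2_le_imp_le)
qed

lemma s1_le: "norm (G *v x) \<le> s1 G * norm x"
proof (cases "x = 0")
  case False
  let ?y = "(1/norm x) *\<^sub>R x"
  have "norm ?y = 1" using False by simp
  hence "norm (G *v ?y) \<le> s1 G" by (rule s1_ge)
  hence "norm (G *v x) / norm x \<le> s1 G" by (simp add: matrix_vector_mult_scaleR)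
  thus ?thesis using False by (simp add: divide_le_eq mult.commute)
qed simp

lemma s1_char: assumes "norm y = 1" "norm (G *v y) = m" "\<And>x. norm x = 1 \<Longrightarrow> norm (G *v x) \<le> m"
  shows "s1 G = m"
proof -
  have "s1 G \<le> m" using assms(3)[of "perp (wk G)"] wk(1)[of G] by (simp add: s1_def)
  moreover have "m \<le> s1 G" using s1_ge[OF assms(1), of G] assms(2) by simp
  ultimately show ?thesis by simp
qed

lemma s2_char: assumes "norm y = 1" "norm (G *v y) = m" "\<And>x. norm x = 1 \<Longrightarrow> m \<le> norm (G *v x)"
  shows "s2 G = m"
proof -
  have "m \<le> s2 G" using assms(3)[of "wk G"] wk(1)[of G] by (simp add: s2_def)
  moreover have "s2 G \<le> m" using wk(2)[OF assms(1), of G] assms(2) by (simp add: s2_def)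
  ultimately show ?thesis by simp
qed

lemma lower_dd: "s1 G * \<bar>inner x (perp (wk G))\<bar> \<le> norm (G *v x)"
proof -
  have "(s1 G * \<bar>inner x (perp (wk G))\<bar>)^2 \<le> (norm (G *v x))^2"
    unfolding norm_sq_formula by (simp add: power_mult_distrib mult.commute)
  thus ?thesis by (rule power2_le_imp_le) simp
qed

lemma sq_sum_le: "0 \<le> a \<Longrightarrow> 0 \<le> b \<Longrightarrow> a^2 + b^2 \<le> (a+b::real)^2"
  by (simp add: power2_sum)

lemma upper_dd: "norm (G *v x) \<le> s2 G * \<bar>inner x (wk G)\<bar> + s1 G * \<bar>inner x (perp (wk G))\<bar>"
proof -
  let ?a = "s2 G * \<bar>inner x (wk G)\<bar>" let ?b = "s1 G * \<bar>inner x (perp (wk G))\<bar>"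
  have a: "0 \<le> ?a" and b: "0 \<le> ?b" using s1_nonneg s2_nonneg by auto
  have "(norm (G *v x))^2 = ?a^2 + ?b^2"
    unfolding norm_sq_formula by (simp add: power_mult_distrib mult.commute)
  also have "\<dots> \<le> (?a + ?b)^2" using a b by (rule sq_sum_le)
  finally have "(norm (G *v x))^2 \<le> (?a + ?b)^2" .
  thus ?thesis by (rule power2_le_imp_le) (rule add_nonneg_nonneg[OF a b])
qed

lemma dd_lower: "norm x = 1 \<Longrightarrow> s1 G * dd x (wk G) \<le> norm (G *v x)"
  using lower_dd by (simp add: dd_def)

lemma dd_upper: assumes "norm x = 1" shows "norm (G *v x) \<le> s2 G + s1 G * dd x (wk G)"
proof -
  have "\<bar>inner x (wk G)\<bar> \<le> 1" using Cauchy_Schwarz_ineq2[of x "wk G"] assms wk(1)[of G] by simp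
  hence "s2 G * \<bar>inner x (wk G)\<bar> \<le> s2 G" using s2_nonneg[of G] by (simp add: mult_left_le)
  thus ?thesis using upper_dd[of G x] by (simp add: dd_def)
qed

lemma s1_mult: "s1 (A ** B) \<le> s1 A * s1 B"
proof -
  have "s1 (A ** B) = norm (A *v (B *v perp (wk (A ** B))))"
    by (simp add: s1_def matrix_vector_mul_assoc)
  also have "\<dots> \<le> s1 A * norm (B *v perp (wk (A ** B)))" by (rule s1_le)
  also have "\<dots> \<le> s1 A * s1 B"
    using s1_ge[of "perp (wk (A ** B))" B] wk(1) s1_nonneg by (simp add: mult_left_mono)
  finally show ?thesis .
qed

lemma s2_mult: "s2 A * s2 B \<le> s2 (A ** B)"
proof -
  have "s2 A * s2 B \<le> s2 A * norm (B *v wk (A ** B))"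
    using s2_le[of B "wk (A ** B)"] wk(1) s2_nonneg by (simp add: mult_left_mono)
  also have "\<dots> \<le> norm (A *v (B *v wk (A ** B)))" by (rule s2_le)
  also have "\<dots> = s2 (A ** B)" by (simp add: s2_def matrix_vector_mul_assoc)
  finally show ?thesis .
qed

lemma s1_scale: "s1 (c *\<^sub>R G) = \<bar>c\<bar> * s1 G"
  apply (rule s1_char[of "perp (wk G)"])
  using wk(1)[of G] apply simp
   apply (simp add: s1_def scaleR_matrix_vector_assoc[symmetric])
  using s1_ge[of _ G] by (simp add: scaleR_matrix_vector_assoc[symmetric] mult_left_mono)

definition det2 :: "real^2^2 \<Rightarrow> real" where "det2 G = G$1$1 * G$2$2 - G$1$2 * G$2$1"
definition adj2 :: "real^2^2 \<Rightarrow> real^2^2" where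
  "adj2 G = (\<chi> i j. if i = 1 then (if j = 1 then G$2$2 else - G$1$2) else (if j = 1 then - G$2$1 else G$1$1))"
definition inv2 :: "real^2^2 \<Rightarrow> real^2^2" where "inv2 G = (1 / det2 G) *\<^sub>R adj2 G"

lemma det2_mult: "det2 (A ** B) = det2 A * det2 B"
  by (simp add: det2_def mm2) algebra

lemma det2_one: "det2 (mat 1) = 1" by (simp add: det2_def mat_def)

lemma mat2_eq: "(X::real^2^2) = Y \<longleftrightarrow> X$1$1 = Y$1$1 \<and> X$1$2 = Y$1$2 \<and> X$2$1 = Y$2$1 \<and> X$2$2 = Y$2$2"
  by (simp add: vec_eq_iff forall_2)

lemma scaleR_mm_left: "(c *\<^sub>R (A::real^2^2)) ** (B::real^2^2) = c *\<^sub>R (A ** B)"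
  by (simp add: mat2_eq mm2 algebra_simps)
lemma scaleR_mm_right: "(A::real^2^2) ** (c *\<^sub>R (B::real^2^2)) = c *\<^sub>R (A ** B)"
  by (simp add: mat2_eq mm2 algebra_simps)

lemma adj2_left: "adj2 G ** G = det2 G *\<^sub>R mat 1"
  unfolding mat2_eq adj2_def mm2 by (simp add: mat_def det2_def algebra_simps)
lemma adj2_right: "G ** adj2 G = det2 G *\<^sub>R mat 1"
  unfolding mat2_eq adj2_def mm2 by (simp add: mat_def det2_def algebra_simps)

lemma inv2_left: "det2 G \<noteq> 0 \<Longrightarrow> inv2 G ** G = mat 1"
  by (simp add: inv2_def scaleR_mm_left adj2_left)

lemma inv2_right: "det2 G \<noteq> 0 \<Longrightarrow> G ** inv2 G = mat 1"
  by (simp add: inv2_def scaleR_mm_right adj2_right)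

lemma det2_inv2: "det2 G \<noteq> 0 \<Longrightarrow> det2 (inv2 G) \<noteq> 0"
  using det2_mult[of "inv2 G" G] inv2_left[of G] det2_one by auto

lemma inv2_unique: assumes "det2 G \<noteq> 0" "H ** G = mat 1" shows "H = inv2 G"
proof -
  have "H = H ** (G ** inv2 G)" using inv2_right[OF assms(1)] by simp
  also have "\<dots> = inv2 G" by (simp add: matrix_mul_assoc assms(2))
  finally show ?thesis .
qed

lemma inv2_mult: assumes "det2 A \<noteq> 0" "det2 B \<noteq> 0" shows "inv2 (A ** B) = inv2 B ** inv2 A"
proof -
  have d: "det2 (A ** B) \<noteq> 0" using assms by (simp add: det2_mult)
  have "(inv2 B ** inv2 A) ** (A ** B) = inv2 B ** ((inv2 A ** A) ** B)" by (simp add: matrix_mul_assoc)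
  also have "\<dots> = mat 1" using assms by (simp add: inv2_left)
  finally show ?thesis using inv2_unique[OF d] by simp
qed

lemma inv2_inv2: "det2 G \<noteq> 0 \<Longrightarrow> inv2 (inv2 G) = G"
  using inv2_unique[OF det2_inv2, of G G] inv2_right[of G] by simp

lemma inv2_apply: "det2 G \<noteq> 0 \<Longrightarrow> inv2 G *v (G *v x) = x"
  by (simp add: matrix_vector_mul_assoc inv2_left)
lemma inv2_apply2: "det2 G \<noteq> 0 \<Longrightarrow> G *v (inv2 G *v x) = x"
  by (simp add: matrix_vector_mul_assoc inv2_right)

lemma s2_pos: assumes "det2 G \<noteq> 0" shows "0 < s2 G"
proof -
  have "G *v wk G \<noteq> 0"
  proof
    assume "G *v wk G = 0"
    hence "wk G = 0" using inv2_apply[OF assms, of "wk G"] by simp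
    thus False using wk(1)[of G] by simp
  qed
  thus ?thesis by (simp add: s2_def)
qed

lemma s1_pos: "det2 G \<noteq> 0 \<Longrightarrow> 0 < s1 G"
  using s2_pos s2_le_s1 by (metis order_less_le_trans)

lemma s1_inv2: assumes d: "det2 G \<noteq> 0" shows "s1 (inv2 G) = 1 / s2 G"
proof (rule s1_char[of "(1 / s2 G) *\<^sub>R (G *v wk G)"])
  have p: "0 < s2 G" by (rule s2_pos[OF d])
  show "norm ((1 / s2 G) *\<^sub>R (G *v wk G)) = 1" using p by (simp add: s2_def)
  show "norm (inv2 G *v ((1 / s2 G) *\<^sub>R (G *v wk G))) = 1 / s2 G"
    using inv2_apply[OF d] wk(1)[of G] by (simp add: matrix_vector_mult_scaleR s2_def)
  fix x :: "real^2" assume x: "norm x = 1"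
  have "s2 G * norm (inv2 G *v x) \<le> norm (G *v (inv2 G *v x))" by (rule s2_le)
  hence "s2 G * norm (inv2 G *v x) \<le> 1" using inv2_apply2[OF d] x by simp
  thus "norm (inv2 G *v x) \<le> 1 / s2 G" using p by (simp add: le_divide_eq mult.commute)
qed

lemma s2_inv2: assumes d: "det2 G \<noteq> 0" shows "s2 (inv2 G) = 1 / s1 G"
proof (rule s2_char[of "(1 / s1 G) *\<^sub>R (G *v perp (wk G))"])
  have p: "0 < s1 G" by (rule s1_pos[OF d])
  show "norm ((1 / s1 G) *\<^sub>R (G *v perp (wk G))) = 1" using p by (simp add: s1_def)
  show "norm (inv2 G *v ((1 / s1 G) *\<^sub>R (G *v perp (wk G)))) = 1 / s1 G"
    using inv2_apply[OF d] wk(1)[of G] by (simp add: matrix_vector_mult_scaleR s1_def)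
  fix x :: "real^2" assume x: "norm x = 1"
  have "norm (G *v (inv2 G *v x)) \<le> s1 G * norm (inv2 G *v x)" by (rule s1_le)
  hence "1 \<le> s1 G * norm (inv2 G *v x)" using inv2_apply2[OF d] x by simp
  thus "1 / s1 G \<le> norm (inv2 G *v x)" using p by (simp add: divide_le_eq mult.commute)
qed

definition rr :: "real^2^2 \<Rightarrow> real" where "rr G = s2 G / s1 G"

lemma rr_inv2: "det2 G \<noteq> 0 \<Longrightarrow> rr (inv2 G) = rr G"
  using s1_pos[of G] s2_pos[of G] by (simp add: rr_def s1_inv2 s2_inv2 field_simps)

lemma rr_mult: assumes "det2 A \<noteq> 0" "det2 B \<noteq> 0" shows "rr A * rr B \<le> rr (A ** B)"
proof -
  have d: "det2 (A ** B) \<noteq> 0" using assms by (simp add: det2_mult)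
  have p: "0 < s1 A" "0 < s1 B" "0 < s1 (A ** B)" using s1_pos assms d by auto
  have q: "0 \<le> s2 A" "0 \<le> s2 B" by (simp_all add: s2_nonneg)
  have "rr A * rr B = (s2 A * s2 B) / (s1 A * s1 B)" by (simp add: rr_def)
  also have "\<dots> \<le> s2 (A ** B) / (s1 A * s1 B)" using p by (intro divide_right_mono s2_mult) simp
  also have "\<dots> \<le> s2 (A ** B) / s1 (A ** B)"
    using p s1_mult[of A B] s2_nonneg by (intro divide_left_mono) auto
  finally show ?thesis by (simp add: rr_def)
qed

lemma step_dd: assumes dB: "det2 B \<noteq> 0" and dG: "det2 G \<noteq> 0"
  shows "dd (wk (B ** G)) (wk G) \<le> (s1 B / s2 B) * rr G"
proof -
  let ?z = "wk (B ** G)"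
  have z: "norm ?z = 1" by (rule wk)
  have pB: "0 < s2 B" and pG: "0 < s1 G" using s2_pos[OF dB] s1_pos[OF dG] .
  have "s2 B * (s1 G * dd ?z (wk G)) \<le> s2 B * norm (G *v ?z)"
    using dd_lower[OF z, of G] pB by simp
  also have "\<dots> \<le> norm (B *v (G *v ?z))" by (rule s2_le)
  also have "\<dots> \<le> norm (B *v (G *v wk G))"
    using wk(2)[of "wk G" "B ** G"] wk(1)[of G] by (simp add: matrix_vector_mul_assoc)
  also have "\<dots> \<le> s1 B * s2 G" using s1_le[of B "G *v wk G"] by (simp add: s2_def)
  finally have "(s2 B * s1 G) * dd ?z (wk G) \<le> s1 B * s2 G" by (simp add: mult.assoc)
  hence "dd ?z (wk G) \<le> (s1 B * s2 G) / (s2 B * s1 G)"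
    using pB pG by (simp add: le_divide_eq mult.commute)
  thus ?thesis by (simp add: rr_def)
qed

lemma gram_inner: "inner ((transpose G ** G) *v v) x = inner (G *v v) (G *v (x::real^'n))"
  apply (simp only: matrix_vector_mul_assoc[symmetric])
  apply (subst transpose_matrix_vector)
  apply (subst dot_lmul_matrix)
  apply (rule refl)
  done

lemma vec_by_inner: assumes "norm s = 1" "inner z s = a" "inner z (perp s) = b"
  shows "z = a *\<^sub>R s + b *\<^sub>R perp s"
  using decomp[OF assms(1), of z] assms(2,3) by simp

lemma gram_s: "(transpose G ** G) *v wk G = (s2 G)^2 *\<^sub>R wk G"
proof -
  have "(transpose G ** G) *v wk G = (s2 G)^2 *\<^sub>R wk G + 0 *\<^sub>R perp (wk G)"
  proof (rule vec_by_inner[OF wk(1)])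
    show "inner ((transpose G ** G) *v wk G) (wk G) = (s2 G)^2"
      unfolding gram_inner s2_def by (simp add: power2_norm_eq_inner)
    show "inner ((transpose G ** G) *v wk G) (perp (wk G)) = 0"
      unfolding gram_inner by (rule orth)
  qed
  thus ?thesis by simp
qed

lemma gram_p: "(transpose G ** G) *v perp (wk G) = (s1 G)^2 *\<^sub>R perp (wk G)"
proof -
  have "(transpose G ** G) *v perp (wk G) = 0 *\<^sub>R wk G + (s1 G)^2 *\<^sub>R perp (wk G)"
  proof (rule vec_by_inner[OF wk(1)])
    show "inner ((transpose G ** G) *v perp (wk G)) (wk G) = 0"
      unfolding gram_inner using orth[of G] by (simp add: inner_commute)
    show "inner ((transpose G ** G) *v perp (wk G)) (perp (wk G)) = (s1 G)^2"
      unfolding gram_inner s1_def by (simp add: power2_norm_eq_inner)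
  qed
  thus ?thesis by simp
qed

lemma gram_eig: "gram_eigenvalues G = {(s2 G)^2, (s1 G)^2}"
proof
  show "gram_eigenvalues G \<subseteq> {(s2 G)^2, (s1 G)^2}"
  proof
    fix e assume "e \<in> gram_eigenvalues G"
    then obtain v where v: "v \<noteq> 0" "(transpose G ** G) *v v = e *\<^sub>R v"
      by (auto simp: gram_eigenvalues_def)
    let ?M = "transpose G ** G" let ?s = "wk G" let ?p = "perp (wk G)"
    have sym: "inner (?M *v x) y = inner x (?M *v y)" for x y
      by (metis gram_inner inner_commute)
    have "e * inner v ?s = inner (?M *v v) ?s" using v(2) by simp
    also have "\<dots> = inner v (?M *v ?s)" by (rule sym)
    also have "\<dots> = (s2 G)^2 * inner v ?s" by (simp add: gram_s)
    finally have a: "(e - (s2 G)^2) * inner v ?s = 0" by (simp add: algebra_simps)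
    have "e * inner v ?p = inner (?M *v v) ?p" using v(2) by simp
    also have "\<dots> = inner v (?M *v ?p)" by (rule sym)
    also have "\<dots> = (s1 G)^2 * inner v ?p" by (simp add: gram_p)
    finally have b: "(e - (s1 G)^2) * inner v ?p = 0" by (simp add: algebra_simps)
    have "inner v ?s \<noteq> 0 \<or> inner v ?p \<noteq> 0"
      using decomp[OF wk(1), of v G] v(1) by auto
    thus "e \<in> {(s2 G)^2, (s1 G)^2}" using a b by auto
  qed
  show "{(s2 G)^2, (s1 G)^2} \<subseteq> gram_eigenvalues G"
  proof -
    have "wk G \<noteq> 0" using wk(1)[of G] by auto
    moreover have "perp (wk G) \<noteq> 0" using wk(1)[of G] norm_perp[of "wk G"] by (metis norm_zero zero_neq_one)
    ultimately show ?thesis unfolding gram_eigenvalues_def using gram_s gram_p by blast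
  qed
qed

lemma sv1_eq: "sv1 G = s1 G"
proof -
  have "Max {(s2 G)^2, (s1 G)^2} = (s1 G)^2"
    using s2_le_s1[of G] s2_nonneg[of G] by (simp add: power_mono max_def)
  thus ?thesis by (simp add: sv1_def gram_eig s1_nonneg)
qed

lemma sv2_eq: "sv2 G = s2 G"
proof -
  have "Min {(s2 G)^2, (s1 G)^2} = (s2 G)^2"
    using s2_le_s1[of G] s2_nonneg[of G] by (simp add: power_mono min_def)
  thus ?thesis by (simp add: sv2_def gram_eig s2_nonneg)
qed

lemma invertible_det2: assumes "invertible (G::real^2^2)" shows "det2 G \<noteq> 0"
proof -
  obtain B where "G ** B = mat 1" using assms unfolding invertible_def by blast
  hence "det2 G * det2 B = 1" using det2_mult[of G B] det2_one by simp
  thus ?thesis by auto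
qed

lemma dd_self: "dd x x = 0" by (simp add: dd_def)

lemma rr_nonneg: "0 \<le> rr G" by (simp add: rr_def s1_nonneg s2_nonneg)

lemma chain_dd:
  assumes ch: "\<And>k. n \<le> k \<Longrightarrow> k < N \<Longrightarrow> G (Suc k) = B k ** G k"
    and dB: "\<And>k. det2 (B k) \<noteq> 0" and cB: "\<And>k. s1 (B k) / s2 (B k) \<le> \<mu>"
    and dG: "\<And>k. det2 (G k) \<noteq> 0" and nN: "n \<le> N"
  shows "dd (wk (G N)) (wk (G n)) \<le> \<mu> * (\<Sum>k\<in>{n..<N}. rr (G k))"
  using nN ch
proof (induction N rule: dec_induct)
  case base
  then show ?case by (simp add: dd_self)
next
  case (step m)
  have "dd (wk (G (Suc m))) (wk (G n)) \<le> dd (wk (G (Suc m))) (wk (G m)) + dd (wk (G m)) (wk (G n))"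
    by (intro dd_tri wk(1))
  also have "dd (wk (G (Suc m))) (wk (G m)) \<le> \<mu> * rr (G m)"
  proof -
    have "dd (wk (G (Suc m))) (wk (G m)) \<le> (s1 (B m) / s2 (B m)) * rr (G m)"
      using step_dd[OF dB dG, of m m] step.prems[of m] step.hyps by simp
    also have "\<dots> \<le> \<mu> * rr (G m)" using cB[of m] rr_nonneg by (rule mult_right_mono)
    finally show ?thesis .
  qed
  also have "dd (wk (G m)) (wk (G n)) \<le> \<mu> * (\<Sum>k\<in>{n..<m}. rr (G k))"
    using step.IH step.prems step.hyps by simp
  finally show ?case using step.hyps by (simp add: distrib_left)
qed

lemma geo_sum: fixes \<theta> :: real assumes "0 < \<theta>" "\<theta> < 1" "n \<le> N"
  shows "(\<Sum>k\<in>{n..<N}. \<theta>^k) = (\<theta>^n - \<theta>^N) / (1 - \<theta>)"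
  using assms(3)
proof (induction N rule: dec_induct)
  case base
  have "(\<theta>^n - \<theta>^n) / (1 - \<theta>) = (0::real)" by simp
  thus ?case by simp
next
  case (step m)
  have "(\<Sum>k\<in>{n..<Suc m}. \<theta>^k) = (\<theta>^n - \<theta>^m)/(1-\<theta>) + \<theta>^m" using step by simp
  also have "\<dots> = (\<theta>^n - \<theta>^Suc m)/(1-\<theta>)" using assms(2) by (simp add: field_simps)
  finally show ?case .
qed

lemma geo_bound: fixes \<theta> D :: real assumes "0 < \<theta>" "\<theta> < 1" "0 \<le> D"
  and r: "\<And>k. n \<le> k \<Longrightarrow> k < N \<Longrightarrow> f k \<le> D * \<theta>^k"
  shows "(\<Sum>k\<in>{n..<N}. f k) \<le> D * \<theta>^n / (1 - \<theta>)"
proof (cases "n \<le> N")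
  case True
  have "(\<Sum>k\<in>{n..<N}. f k) \<le> (\<Sum>k\<in>{n..<N}. D * \<theta>^k)" by (rule sum_mono) (use r in auto)
  also have "\<dots> = D * ((\<theta>^n - \<theta>^N) / (1 - \<theta>))" by (simp add: sum_distrib_left[symmetric] geo_sum[OF assms(1,2) True])
  also have "\<dots> \<le> D * (\<theta>^n / (1 - \<theta>))"
    using assms by (intro mult_left_mono divide_right_mono) auto
  finally show ?thesis by simp
next
  case False
  then show ?thesis using assms by simp
qed

lemma le_of_limit: fixes a :: "nat \<Rightarrow> real"
  assumes "a \<longlonglongrightarrow> 0" "\<And>N. n \<le> N \<Longrightarrow> x \<le> a N + c" shows "x \<le> c"
proof -
  have "(\<lambda>N. a N + c) \<longlonglongrightarrow> 0 + c" by (intro tendsto_add assms(1) tendsto_const)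
  moreover have "\<forall>\<^sub>F N in sequentially. x \<le> a N + c"
    using eventually_ge_at_top[of n] by eventually_elim (rule assms(2))
  ultimately show ?thesis using tendsto_le[OF trivial_limit_sequentially _ tendsto_const] by fastforce
qed

lemma dd_le_ratio: assumes "norm e = 1" "det2 G \<noteq> 0" shows "dd e (wk G) \<le> norm (G *v e) / s1 G"
  using dd_lower[OF assms(1), of G] s1_pos[OF assms(2)] by (simp add: le_divide_eq mult.commute)

lemma norm_le_dd: assumes "norm e = 1" "det2 G \<noteq> 0" shows "norm (G *v e) \<le> (rr G + dd e (wk G)) * s1 G"
proof -
  have "(rr G + dd e (wk G)) * s1 G = s2 G + s1 G * dd e (wk G)"
    using s1_pos[OF assms(2)] by (simp add: rr_def field_simps)
  thus ?thesis using dd_upper[OF assms(1), of G] by simp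
qed

lemma dd_bound_fin:
  assumes ch: "\<And>k. n \<le> k \<Longrightarrow> k < N \<Longrightarrow> G (Suc k) = B k ** G k"
    and dB: "\<And>k. det2 (B k) \<noteq> 0" and cB: "\<And>k. s1 (B k) / s2 (B k) \<le> \<mu>" and mu: "0 \<le> \<mu>"
    and dG: "\<And>k. det2 (G k) \<noteq> 0" and rG: "\<And>k. n \<le> k \<Longrightarrow> k < N \<Longrightarrow> rr (G k) \<le> D * \<theta>^k"
    and th: "0 < \<theta>" "\<theta> < 1" and D: "0 \<le> D" and e: "norm e = 1" and nN: "n \<le> N"
  shows "dd e (wk (G n)) \<le> norm (G N *v e) / s1 (G N) + \<mu> * (D * \<theta>^n / (1 - \<theta>))"
proof -
  have "dd e (wk (G n)) \<le> dd e (wk (G N)) + dd (wk (G N)) (wk (G n))"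
    by (intro dd_tri e wk(1))
  also have "dd e (wk (G N)) \<le> norm (G N *v e) / s1 (G N)" by (rule dd_le_ratio[OF e dG])
  also have "dd (wk (G N)) (wk (G n)) \<le> \<mu> * (\<Sum>k\<in>{n..<N}. rr (G k))"
    by (rule chain_dd[of n N G B \<mu>]) (use ch dB cB dG nN in auto)
  also have "\<dots> \<le> \<mu> * (D * \<theta>^n / (1 - \<theta>))"
    by (intro mult_left_mono geo_bound th D mu rG)
  finally show ?thesis by simp
qed

lemma stable_bound:
  assumes ch: "\<And>k. G (Suc k) = B k ** G k"
    and dB: "\<And>k. det2 (B k) \<noteq> 0" and cB: "\<And>k. s1 (B k) / s2 (B k) \<le> \<mu>" and mu: "0 \<le> \<mu>"
    and dG: "\<And>k. det2 (G k) \<noteq> 0" and rG: "\<And>k. rr (G k) \<le> D * \<theta>^k"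
    and th: "0 < \<theta>" "\<theta> < 1" and D: "0 \<le> D" and e: "norm e = 1"
    and lim: "(\<lambda>k. norm (G k *v e) / s1 (G k)) \<longlonglongrightarrow> 0"
  shows "norm (G n *v e) \<le> (D + \<mu> * D / (1 - \<theta>)) * \<theta>^n * s1 (G n)"
proof -
  have dd: "dd e (wk (G n)) \<le> \<mu> * (D * \<theta>^n / (1 - \<theta>))"
    by (rule le_of_limit[OF lim, of n]) (rule dd_bound_fin[OF ch dB cB mu dG rG th D e])
  have "norm (G n *v e) \<le> (rr (G n) + dd e (wk (G n))) * s1 (G n)" by (rule norm_le_dd[OF e dG])
  also have "\<dots> \<le> (D * \<theta>^n + \<mu> * (D * \<theta>^n / (1 - \<theta>))) * s1 (G n)"
    by (intro mult_right_mono add_mono rG dd s1_nonneg)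
  also have "\<dots> = (D + \<mu> * D / (1 - \<theta>)) * \<theta>^n * s1 (G n)" by (simp add: algebra_simps)
  finally show ?thesis .
qed

lemma word_prod_Nil[simp]: "word_prod A [] = mat 1" by (simp add: word_prod_def)
lemma word_prod_Cons[simp]: "word_prod A (a # w) = A a ** word_prod A w" by (simp add: word_prod_def)
lemma word_prod_append: "word_prod A (xs @ ys) = word_prod A xs ** word_prod A ys"
  by (induction xs) (simp_all add: matrix_mul_assoc)

lemma det2_word: "(\<And>i. det2 (A i) \<noteq> 0) \<Longrightarrow> det2 (word_prod A w) \<noteq> 0"
  by (induction w) (simp_all add: det2_mult det2_one)

fun seg :: "('n \<Rightarrow> real^2^2) \<Rightarrow> (int \<Rightarrow> 'n) \<Rightarrow> int \<Rightarrow> nat \<Rightarrow> real^2^2" where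
  "seg A \<omega> j 0 = mat 1"
| "seg A \<omega> j (Suc n) = A (\<omega> (j + int n)) ** seg A \<omega> j n"

lemma seg_word: "seg A \<omega> j n = word_prod A (rev (map (\<lambda>i. \<omega> (j + int i)) [0..<n]))"
  by (induction n) (simp_all add: word_prod_append)

lemma seg_add: "seg A \<omega> j (n + k) = seg A \<omega> (j + int n) k ** seg A \<omega> j n"
  by (induction k) (simp_all add: matrix_mul_assoc algebra_simps)

lemma seg_one: "seg A \<omega> j 1 = A (\<omega> j)"
  using seg.simps(2)[of A \<omega> j 0] by simp

locale dom2 =
  fixes A :: "'n::finite \<Rightarrow> real^2^2" and C \<tau> :: real
  assumes detA: "\<And>i. det2 (A i) \<noteq> 0" and Cpos: "0 < C" and tau: "0 < \<tau>" "\<tau> < 1"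
    and domw: "\<And>w. rr (word_prod A w) \<le> C * \<tau> ^ length w"
begin

definition mu where "mu = Max (range (\<lambda>i. s1 (A i) / s2 (A i)))"
definition nu where "nu = Min (range (\<lambda>i. rr (A i)))"

lemma cond_le: "s1 (A i) / s2 (A i) \<le> mu"
  unfolding mu_def by (rule Max_ge) auto

lemma cond_inv_le: "s1 (inv2 (A i)) / s2 (inv2 (A i)) \<le> mu"
  using cond_le[of i] s1_pos[OF detA[of i]] s2_pos[OF detA[of i]]
  by (simp add: s1_inv2[OF detA] s2_inv2[OF detA] field_simps)

lemma mu_nonneg: "0 \<le> mu"
  using cond_le[of undefined] s1_nonneg s2_nonneg by (metis divide_nonneg_nonneg order_trans)

lemma nu_pos: "0 < nu"
proof -
  have "\<forall>x\<in>range (\<lambda>i. rr (A i)). 0 < x"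
    using s1_pos[OF detA] s2_pos[OF detA] by (auto simp: rr_def)
  thus ?thesis unfolding nu_def by (subst Min_gr_iff) auto
qed

lemma nu_le: "nu \<le> rr (A i)" unfolding nu_def by (rule Min_le) auto

lemma det_seg: "det2 (seg A \<omega> j n) \<noteq> 0"
  by (induction n) (simp_all add: det2_mult det2_one detA)

lemma rr_seg: "rr (seg A \<omega> j n) \<le> C * \<tau> ^ n"
  using domw[of "rev (map (\<lambda>i. \<omega> (j + int i)) [0..<n])"] by (simp add: seg_word)

lemma rr_seg_lower: "nu ^ n \<le> rr (seg A \<omega> j n)"
proof (induction n)
  case 0
  have "rr (mat 1 :: real^2^2) = 1"
  proof -
    have "s1 (mat 1 :: real^2^2) = 1" by (rule s1_char[of "axis 1 1"]) simp_all
    moreover have "s2 (mat 1 :: real^2^2) = 1" by (rule s2_char[of "axis 1 1"]) simp_all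
    ultimately show ?thesis by (simp add: rr_def)
  qed
  then show ?case by simp
next
  case (Suc n)
  have "nu ^ Suc n = nu * nu ^ n" by simp
  also have "\<dots> \<le> rr (A (\<omega> (j + int n))) * rr (seg A \<omega> j n)"
    using nu_pos by (intro mult_mono nu_le Suc.IH) (auto simp: rr_nonneg)
  also have "\<dots> \<le> rr (seg A \<omega> j (Suc n))" by (simp add: rr_mult detA det_seg)
  finally show ?case .
qed

definition Es where "Es \<omega> j e \<longleftrightarrow> (\<lambda>k. norm (seg A \<omega> j k *v e) / s1 (seg A \<omega> j k)) \<longlonglongrightarrow> 0"
definition Eu where "Eu \<omega> j e \<longleftrightarrow> (\<lambda>m. norm (inv2 (seg A \<omega> (j - int m) m) *v e) / s1 (inv2 (seg A \<omega> (j - int m) m))) \<longlonglongrightarrow> 0"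

lemma Es_scale: assumes "Es \<omega> j e" shows "Es \<omega> j (c *\<^sub>R e)"
proof -
  have "(\<lambda>k. \<bar>c\<bar> * (norm (seg A \<omega> j k *v e) / s1 (seg A \<omega> j k))) \<longlonglongrightarrow> \<bar>c\<bar> * 0"
    using assms unfolding Es_def by (intro tendsto_mult_left)
  thus ?thesis unfolding Es_def by (simp add: matrix_vector_mult_scaleR)
qed

lemma Eu_scale: assumes "Eu \<omega> j e" shows "Eu \<omega> j (c *\<^sub>R e)"
proof -
  have "(\<lambda>m. \<bar>c\<bar> * (norm (inv2 (seg A \<omega> (j - int m) m) *v e) / s1 (inv2 (seg A \<omega> (j - int m) m)))) \<longlonglongrightarrow> \<bar>c\<bar> * 0"
    using assms unfolding Eu_def by (intro tendsto_mult_left)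
  thus ?thesis unfolding Eu_def by (simp add: matrix_vector_mult_scaleR)
qed

lemma inv_s1_le: assumes "det2 X \<noteq> 0" "det2 Y \<noteq> 0" and a: "0 \<le> a"
  shows "a / s1 X \<le> s1 Y * (a / s1 (X ** Y))"
proof -
  have p: "0 < s1 X" "0 < s1 Y" "0 < s1 (X ** Y)" using s1_pos assms(1,2) by (auto simp: det2_mult)
  have "s1 (X ** Y) \<le> s1 X * s1 Y" by (rule s1_mult)
  hence "a * s1 (X ** Y) \<le> a * (s1 X * s1 Y)" using a by (rule mult_left_mono)
  thus ?thesis using p by (simp add: field_simps)
qed

lemma Es_fwd: assumes "Es \<omega> j e" shows "Es \<omega> (j + int n) (seg A \<omega> j n *v e)"
proof -
  let ?F = "seg A \<omega> j n"
  let ?a = "\<lambda>k. norm (seg A \<omega> j k *v e) / s1 (seg A \<omega> j k)"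
  have lim: "(\<lambda>k. s1 ?F * ?a (k + n)) \<longlonglongrightarrow> 0"
    using assms unfolding Es_def using tendsto_mult_left[OF LIMSEQ_ignore_initial_segment] by fastforce
  have bd: "norm (norm (seg A \<omega> (j + int n) k *v (?F *v e)) / s1 (seg A \<omega> (j + int n) k)) \<le> s1 ?F * ?a (k + n)" for k
  proof -
    have eq: "seg A \<omega> (j + int n) k ** ?F = seg A \<omega> j (k + n)" using seg_add[of A \<omega> j n k] by (simp add: add.commute)
    show ?thesis using inv_s1_le[OF det_seg det_seg, of "norm (seg A \<omega> (j + int n) k *v (?F *v e))" \<omega> "j + int n" k \<omega> j n]
      by (simp add: matrix_vector_mul_assoc eq s1_nonneg)
  qed
  show ?thesis unfolding Es_def by (rule Lim_null_comparison[OF always_eventually[OF allI[OF bd]] lim])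
qed

lemma Eu_fwd: assumes "Eu \<omega> j e" shows "Eu \<omega> (j + int n) (seg A \<omega> j n *v e)"
proof -
  let ?F = "seg A \<omega> j n"
  let ?b = "\<lambda>m. norm (inv2 (seg A \<omega> (j - int m) m) *v e) / s1 (inv2 (seg A \<omega> (j - int m) m))"
  let ?X = "\<lambda>m. inv2 (seg A \<omega> (j + int n - int m) m)"
  have lim: "(\<lambda>m. s1 ?F * ?b m) \<longlonglongrightarrow> 0"
    using assms unfolding Eu_def using tendsto_mult_left by fastforce
  have bd: "norm (norm (?X (m + n) *v (?F *v e)) / s1 (?X (m + n))) \<le> s1 ?F * ?b m" for m
  proof -
    let ?P = "seg A \<omega> (j - int m) m"
    have "seg A \<omega> (j - int m) (m + n) = ?F ** ?P" using seg_add[of A \<omega> "j - int m" m n] by simp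
    hence X: "inv2 (seg A \<omega> (j - int m) (m + n)) = inv2 ?P ** inv2 ?F" by (simp add: inv2_mult det_seg)
    have XF: "inv2 (seg A \<omega> (j - int m) (m + n)) ** ?F = inv2 ?P" unfolding X by (simp add: matrix_mul_assoc[symmetric] inv2_left det_seg)
    have v: "inv2 (seg A \<omega> (j - int m) (m + n)) *v (?F *v e) = inv2 ?P *v e" by (simp add: matrix_vector_mul_assoc XF)
    have dX: "det2 (inv2 (seg A \<omega> (j - int m) (m + n))) \<noteq> 0" by (simp add: det2_inv2 det_seg)
    show ?thesis using inv_s1_le[OF dX det_seg, of "norm (inv2 ?P *v e)" \<omega> j n] by (simp add: v XF s1_nonneg)
  qed
  have "(\<lambda>m. norm (?X (m + n) *v (?F *v e)) / s1 (?X (m + n))) \<longlonglongrightarrow> 0"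
    by (rule Lim_null_comparison[OF always_eventually[OF allI[OF bd]] lim])
  thus ?thesis unfolding Eu_def by (rule LIMSEQ_offset)
qed

lemma Es_bwd: assumes "Es \<omega> (j + int n) (seg A \<omega> j n *v e)" shows "Es \<omega> j e"
proof -
  let ?F = "seg A \<omega> j n"
  let ?a = "\<lambda>k. norm (seg A \<omega> (j + int n) k *v (?F *v e)) / s1 (seg A \<omega> (j + int n) k)"
  have lim: "(\<lambda>k. s1 (inv2 ?F) * ?a k) \<longlonglongrightarrow> 0"
    using assms unfolding Es_def using tendsto_mult_left by fastforce
  have bd: "norm (norm (seg A \<omega> j (k + n) *v e) / s1 (seg A \<omega> j (k + n))) \<le> s1 (inv2 ?F) * ?a k" for k
  proof -
    have eq: "seg A \<omega> j (k + n) = seg A \<omega> (j + int n) k ** ?F" using seg_add[of A \<omega> j n k] by (simp add: add.commute)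
    have eq2: "seg A \<omega> j (k + n) ** inv2 ?F = seg A \<omega> (j + int n) k"
      unfolding eq by (simp add: matrix_mul_assoc[symmetric] inv2_right det_seg)
    show ?thesis using inv_s1_le[OF det_seg det2_inv2[OF det_seg], of "norm (seg A \<omega> j (k + n) *v e)" \<omega> j "k + n" \<omega> j n]
      by (simp add: eq2 s1_nonneg) (simp add: eq matrix_vector_mul_assoc)
  qed
  have "(\<lambda>k. norm (seg A \<omega> j (k + n) *v e) / s1 (seg A \<omega> j (k + n))) \<longlonglongrightarrow> 0"
    by (rule Lim_null_comparison[OF always_eventually[OF allI[OF bd]] lim])
  thus ?thesis unfolding Es_def by (rule LIMSEQ_offset)
qed

lemma Eu_bwd: assumes "Eu \<omega> (j + int n) (seg A \<omega> j n *v e)" shows "Eu \<omega> j e"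
proof -
  let ?F = "seg A \<omega> j n"
  let ?X = "\<lambda>m. inv2 (seg A \<omega> (j + int n - int m) m)"
  let ?a = "\<lambda>m. norm (?X m *v (?F *v e)) / s1 (?X m)"
  have "(\<lambda>m. ?a (m + n)) \<longlonglongrightarrow> 0" using assms unfolding Eu_def by (rule LIMSEQ_ignore_initial_segment)
  from tendsto_mult_left[OF this, of "s1 (inv2 ?F)"]
  have lim: "(\<lambda>m. s1 (inv2 ?F) * ?a (m + n)) \<longlonglongrightarrow> 0" by simp
  have bd: "norm (norm (inv2 (seg A \<omega> (j - int m) m) *v e) / s1 (inv2 (seg A \<omega> (j - int m) m))) \<le> s1 (inv2 ?F) * ?a (m + n)" for m
  proof -
    let ?P = "seg A \<omega> (j - int m) m"
    have "seg A \<omega> (j - int m) (m + n) = ?F ** ?P" using seg_add[of A \<omega> "j - int m" m n] by simp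
    hence X: "inv2 (seg A \<omega> (j - int m) (m + n)) = inv2 ?P ** inv2 ?F" by (simp add: inv2_mult det_seg)
    have XF: "inv2 (seg A \<omega> (j - int m) (m + n)) ** ?F = inv2 ?P" unfolding X by (simp add: matrix_mul_assoc[symmetric] inv2_left det_seg)
    have v: "inv2 (seg A \<omega> (j - int m) (m + n)) *v (?F *v e) = inv2 ?P *v e" by (simp add: matrix_vector_mul_assoc XF)
    show ?thesis using inv_s1_le[OF det2_inv2[OF det_seg] det2_inv2[OF det_seg], of "norm (inv2 ?P *v e)" \<omega> "j - int m" m \<omega> j n]
      by (simp add: v X[symmetric] s1_nonneg)
  qed
  show ?thesis unfolding Eu_def
    by (rule Lim_null_comparison[OF always_eventually[OF allI[OF bd]] lim])
qed

end

context dom2 begin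

lemma nonzero_image: assumes "det2 G \<noteq> 0" "e \<noteq> 0" shows "G *v e \<noteq> 0"
proof
  assume "G *v e = 0"
  hence "inv2 G *v (G *v e) = 0" by simp
  thus False using inv2_apply[OF assms(1), of e] assms(2) by simp
qed

lemma common_all: assumes e: "e \<noteq> 0" "Es \<omega> 0 e" "Eu \<omega> 0 e"
  shows "\<exists>f. norm f = 1 \<and> Es \<omega> j f \<and> Eu \<omega> j f"
proof -
  have "\<exists>g. g \<noteq> 0 \<and> Es \<omega> j g \<and> Eu \<omega> j g"
  proof (cases "0 \<le> j")
    case True
    define n where "n = nat j"
    have j: "j = 0 + int n" using True by (simp add: n_def)
    show ?thesis
      using Es_fwd[OF e(2), of n] Eu_fwd[OF e(3), of n] nonzero_image[OF det_seg e(1)] j by metis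
  next
    case False
    define n where "n = nat (- j)"
    have j: "j + int n = 0" using False by (simp add: n_def)
    let ?g = "inv2 (seg A \<omega> j n) *v e"
    have g: "seg A \<omega> j n *v ?g = e" by (rule inv2_apply2[OF det_seg])
    have "Es \<omega> j ?g" by (rule Es_bwd[of \<omega> j n]) (simp add: g j e(2))
    moreover have "Eu \<omega> j ?g" by (rule Eu_bwd[of \<omega> j n]) (simp add: g j e(3))
    moreover have "?g \<noteq> 0" using g e(1) by auto
    ultimately show ?thesis by blast
  qed
  then obtain g where g: "g \<noteq> 0" "Es \<omega> j g" "Eu \<omega> j g" by blast
  show ?thesis
    by (rule exI[of _ "(1 / norm g) *\<^sub>R g"]) (use g Es_scale Eu_scale in auto)
qed

lemma seg_back: "seg A \<omega> (x - int (Suc m)) (Suc m) = seg A \<omega> (x - int m) m ** A (\<omega> (x - int m - 1))"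
proof -
  have "seg A \<omega> (x - int (Suc m)) (1 + m) = seg A \<omega> (x - int (Suc m) + 1) m ** seg A \<omega> (x - int (Suc m)) 1"
    using seg_add[of A \<omega> "x - int (Suc m)" 1 m] by simp
  thus ?thesis by (simp add: seg_one algebra_simps)
qed

lemma pow_aux: fixes k t s :: real shows "k * t^n * (k * t^n * s) = (k^2 * (t^2)^n) * s"
proof -
  have "(t^2)^n = t^n * t^n" by (metis power_mult mult.commute power2_eq_square)
  thus ?thesis by (simp add: power2_eq_square mult_ac)
qed

lemma boot:
  assumes common: "\<And>j. \<exists>e. norm e = 1 \<and> Es \<omega> j e \<and> Eu \<omega> j e"
    and bd: "\<And>j n. rr (seg A \<omega> j n) \<le> D * \<theta>^n" and th: "0 < \<theta>" "\<theta> < 1" and D: "0 \<le> D"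
  shows "rr (seg A \<omega> j n) \<le> (D + mu * D / (1 - \<theta>))^2 * (\<theta>^2)^n"
proof -
  let ?K = "D + mu * D / (1 - \<theta>)"
  have K: "0 \<le> ?K" using D mu_nonneg th by (intro add_nonneg_nonneg divide_nonneg_nonneg mult_nonneg_nonneg) auto
  obtain e where e: "norm e = 1" "Es \<omega> j e" "Eu \<omega> j e" using common by blast
  let ?F = "seg A \<omega> j n"
  have dF: "det2 ?F \<noteq> 0" by (rule det_seg)
  have fut: "norm (?F *v e) \<le> ?K * \<theta>^n * s1 ?F"
    by (rule stable_bound[of "\<lambda>k. seg A \<omega> j k" "\<lambda>k. A (\<omega> (j + int k))" mu D \<theta> e n])
       (use e bd th D mu_nonneg cond_le detA det_seg in \<open>auto simp: Es_def\<close>)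
  let ?f = "?F *v e"
  have "e \<noteq> 0" using e(1) by auto
  hence fnz: "?f \<noteq> 0" by (rule nonzero_image[OF dF])
  hence fpos: "0 < norm ?f" by simp
  let ?f' = "(1 / norm ?f) *\<^sub>R ?f"
  have f'1: "norm ?f' = 1" using fnz by simp
  have Eu': "Eu \<omega> (j + int n) ?f'" by (rule Eu_scale[OF Eu_fwd[OF e(3)]])
  let ?G = "\<lambda>m. inv2 (seg A \<omega> (j + int n - int m) m)"
  let ?B = "\<lambda>m. inv2 (A (\<omega> (j + int n - int m - 1)))"
  have chain: "?G (Suc m) = ?B m ** ?G m" for m
    by (simp only: seg_back inv2_mult[OF det_seg detA])
  have rrG: "rr (?G m) \<le> D * \<theta>^m" for m using bd by (simp add: rr_inv2 det_seg)
  have past: "norm (?G n *v ?f') \<le> ?K * \<theta>^n * s1 (?G n)"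
    by (rule stable_bound[of ?G ?B mu D \<theta> ?f' n])
       (use chain rrG th D mu_nonneg f'1 Eu' in \<open>auto simp: Eu_def cond_inv_le det2_inv2 detA det_seg\<close>)
  have Gn: "?G n = inv2 ?F" by simp
  have "?G n *v ?f' = (1 / norm ?f) *\<^sub>R e" by (simp add: matrix_vector_mult_scaleR inv2_apply[OF dF])
  hence lhs: "norm (?G n *v ?f') = 1 / norm ?f" using e(1) by simp
  have s1G: "s1 (?G n) = 1 / s2 ?F" by (simp add: s1_inv2[OF dF])
  have s2p: "0 < s2 ?F" by (rule s2_pos[OF dF])
  have s1p: "0 < s1 ?F" by (rule s1_pos[OF dF])
  from past have "1 / norm ?f \<le> ?K * \<theta>^n * (1 / s2 ?F)" by (simp only: lhs s1G)
  hence "s2 ?F \<le> ?K * \<theta>^n * norm ?f" using s2p fpos by (simp add: field_simps)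
  also have "\<dots> \<le> ?K * \<theta>^n * (?K * \<theta>^n * s1 ?F)"
    using fut K th by (intro mult_left_mono) auto
  finally have "s2 ?F \<le> (?K^2 * (\<theta>^2)^n) * s1 ?F" by (simp only: pow_aux)
  thus ?thesis using s1p by (simp add: rr_def divide_le_eq)
qed

lemma boot_iter:
  assumes common: "\<And>j. \<exists>e. norm e = 1 \<and> Es \<omega> j e \<and> Eu \<omega> j e"
  shows "\<exists>D\<ge>0. \<forall>j n. rr (seg A \<omega> j n) \<le> D * (\<tau>^(2^i))^n"
proof (induction i)
  case 0
  show ?case using rr_seg Cpos by (intro exI[of _ C]) auto
next
  case (Suc i)
  then obtain D where D: "0 \<le> D" "\<And>j n. rr (seg A \<omega> j n) \<le> D * (\<tau>^(2^i))^n" by blast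
  let ?\<theta> = "\<tau>^(2^i)"
  have th: "0 < ?\<theta>" "?\<theta> < 1" using tau by (simp_all add: power_less_one_iff)
  have eq: "\<tau>^(2^Suc i) = ?\<theta>^2" by (simp add: power_mult[symmetric] mult.commute)
  show ?case
    apply (rule exI[of _ "(D + mu * D / (1 - ?\<theta>))^2"])
    using boot[OF common D(2) th D(1)] eq by simp
qed

theorem exact: assumes "e \<noteq> 0" "Es \<omega> 0 e" "Eu \<omega> 0 e" shows False
proof -
  have common: "\<And>j. \<exists>f. norm f = 1 \<and> Es \<omega> j f \<and> Eu \<omega> j f" by (rule common_all[OF assms])
  obtain k where k: "\<tau>^k < nu" using real_arch_pow_inv[OF nu_pos tau(2)] by blast
  have "\<tau>^(2^k) \<le> \<tau>^k" using tau by (intro power_decreasing) (auto simp: less_imp_le)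
  hence th: "\<tau>^(2^k) < nu" using k by linarith
  obtain D where D: "0 \<le> D" "\<And>j n. rr (seg A \<omega> j n) \<le> D * (\<tau>^(2^k))^n"
    using boot_iter[OF common, of k] by blast
  let ?\<theta> = "\<tau>^(2^k)"
  have thp: "0 < ?\<theta>" using tau by simp
  have x1: "1 < nu / ?\<theta>" using th thp by simp
  obtain n where n: "D < (nu / ?\<theta>)^n" using real_arch_pow[OF x1] by blast
  have "nu^n \<le> D * ?\<theta>^n" using rr_seg_lower[of n \<omega> 0] D(2)[of 0 n] by linarith
  hence "(nu / ?\<theta>)^n \<le> D" using thp by (simp add: power_divide divide_le_eq)
  with n show False by simp
qed

end

definition win :: "nat \<Rightarrow> 'a list \<Rightarrow> 'a list \<times> 'a list" where
  "win N xs = (take N xs, take N (rev xs))"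

lemma pick_step:
  fixes w :: "nat \<Rightarrow> 'a::finite list"
  assumes J: "infinite J" and ev: "\<forall>\<^sub>F k in sequentially. N \<le> length (w k)"
  shows "\<exists>J'. J' \<subseteq> J \<and> infinite J' \<and> (\<forall>k\<in>J'. N \<le> length (w k)) \<and> (\<exists>W. \<forall>k\<in>J'. win N (w k) = W)"
proof -
  obtain K where K: "\<And>k. K \<le> k \<Longrightarrow> N \<le> length (w k)" using ev unfolding eventually_sequentially by blast
  let ?J0 = "J - {..<K}"
  have J0: "infinite ?J0" using J by (simp add: Diff_infinite_finite)
  have J0len: "\<forall>k\<in>?J0. N \<le> length (w k)" using K by auto
  let ?f = "\<lambda>k. win N (w k)"
  have "?f ` ?J0 \<subseteq> {xs. set xs \<subseteq> UNIV \<and> length xs \<le> N} \<times> {xs. set xs \<subseteq> UNIV \<and> length xs \<le> N}"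
    by (auto simp: win_def)
  moreover have "finite ({xs. set xs \<subseteq> (UNIV::'a set) \<and> length xs \<le> N} \<times> {xs. set xs \<subseteq> (UNIV::'a set) \<and> length xs \<le> N})"
    by (intro finite_cartesian_product finite_lists_length_le) simp_all
  ultimately have fin: "finite (?f ` ?J0)" by (rule finite_subset)
  obtain y where y: "infinite (?f -` {y} \<inter> ?J0)" using inf_img_fin_dom'[OF fin J0] by blast
  show ?thesis
    by (rule exI[of _ "?f -` {y} \<inter> ?J0"]) (use y J0len in auto)
qed

primrec Iset :: "(nat \<Rightarrow> 'a list) \<Rightarrow> nat \<Rightarrow> nat set" where
  "Iset w 0 = UNIV"
| "Iset w (Suc N) = (SOME J'. J' \<subseteq> Iset w N \<and> infinite J' \<and> (\<forall>k\<in>J'. Suc N \<le> length (w k)) \<and> (\<exists>W. \<forall>k\<in>J'. win (Suc N) (w k) = W))"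

lemma Iset_props:
  fixes w :: "nat \<Rightarrow> 'a::finite list"
  assumes lim: "\<And>N. \<forall>\<^sub>F k in sequentially. N \<le> length (w k)"
  shows "infinite (Iset w N) \<and> (\<forall>k\<in>Iset w N. N \<le> length (w k)) \<and> (\<exists>W. \<forall>k\<in>Iset w N. win N (w k) = W)
         \<and> Iset w (Suc N) \<subseteq> Iset w N"
proof (induction N)
  case 0
  have "infinite (Iset w 0)" by simp
  moreover have "\<exists>W. \<forall>k\<in>Iset w 0. win 0 (w k) = W" by (simp add: win_def)
  moreover have "Iset w (Suc 0) \<subseteq> Iset w 0" by simp
  ultimately show ?case by simp
next
  case (Suc N)
  have ex: "\<exists>J'. J' \<subseteq> Iset w N \<and> infinite J' \<and> (\<forall>k\<in>J'. Suc N \<le> length (w k)) \<and> (\<exists>W. \<forall>k\<in>J'. win (Suc N) (w k) = W)"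
    using Suc.IH lim by (intro pick_step) auto
  have P: "Iset w (Suc N) \<subseteq> Iset w N \<and> infinite (Iset w (Suc N)) \<and> (\<forall>k\<in>Iset w (Suc N). Suc N \<le> length (w k)) \<and> (\<exists>W. \<forall>k\<in>Iset w (Suc N). win (Suc N) (w k) = W)"
    unfolding Iset.simps(2) by (rule someI_ex[OF ex])
  have ex2: "\<exists>J'. J' \<subseteq> Iset w (Suc N) \<and> infinite J' \<and> (\<forall>k\<in>J'. Suc (Suc N) \<le> length (w k)) \<and> (\<exists>W. \<forall>k\<in>J'. win (Suc (Suc N)) (w k) = W)"
    using P lim by (intro pick_step) auto
  have "Iset w (Suc (Suc N)) \<subseteq> Iset w (Suc N)"
    using someI_ex[OF ex2] unfolding Iset.simps(2)[of w "Suc N"] by blast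
  thus ?case using P by blast
qed

lemma Iset_mono:
  fixes w :: "nat \<Rightarrow> 'a::finite list"
  assumes lim: "\<And>N. \<forall>\<^sub>F k in sequentially. N \<le> length (w k)" and le: "N \<le> N'"
  shows "Iset w N' \<subseteq> Iset w N"
  using le
proof (induction N' rule: dec_induct)
  case base then show ?case by simp
next
  case (step m) then show ?case using Iset_props[OF lim, of m] by blast
qed

definition kk :: "(nat \<Rightarrow> 'a list) \<Rightarrow> nat \<Rightarrow> nat" where "kk w i = (SOME k. k \<in> Iset w (Suc i))"

definition omega :: "(nat \<Rightarrow> 'a list) \<Rightarrow> int \<Rightarrow> 'a" where
  "omega w j = (if 0 \<le> j then rev (w (kk w (nat j))) ! nat j else w (kk w (nat (- j - 1))) ! nat (- j - 1))"

lemma consistent: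
  fixes w :: "nat \<Rightarrow> 'a::finite list"
  assumes lim: "\<And>N. \<forall>\<^sub>F k in sequentially. N \<le> length (w k)" and k: "k \<in> Iset w N" and i: "i < N"
  shows "w k ! i = w (kk w i) ! i \<and> rev (w k) ! i = rev (w (kk w i)) ! i"
proof -
  have "Iset w (Suc i) \<noteq> {}" using Iset_props[OF lim, of "Suc i"] by auto
  hence kk: "kk w i \<in> Iset w (Suc i)" unfolding kk_def by (simp add: some_in_eq)
  have k': "k \<in> Iset w (Suc i)" using Iset_mono[OF lim, of "Suc i" N] i k by auto
  obtain W where W: "\<forall>k\<in>Iset w (Suc i). win (Suc i) (w k) = W" using Iset_props[OF lim, of "Suc i"] by blast
  have "win (Suc i) (w k) = win (Suc i) (w (kk w i))" using W kk k' by simp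
  hence "take (Suc i) (w k) = take (Suc i) (w (kk w i))" "take (Suc i) (rev (w k)) = take (Suc i) (rev (w (kk w i)))"
    by (simp_all add: win_def)
  thus ?thesis by (metis lessI nth_take)
qed

lemma omega_pos:
  fixes w :: "nat \<Rightarrow> 'a::finite list"
  assumes lim: "\<And>N. \<forall>\<^sub>F k in sequentially. N \<le> length (w k)" and k: "k \<in> Iset w N" and i: "i < N"
  shows "omega w (int i) = rev (w k) ! i"
  using consistent[OF lim k i] by (simp add: omega_def)

lemma omega_neg:
  fixes w :: "nat \<Rightarrow> 'a::finite list"
  assumes lim: "\<And>N. \<forall>\<^sub>F k in sequentially. N \<le> length (w k)" and k: "k \<in> Iset w N" and i: "i < N"
  shows "omega w (- int i - 1) = w k ! i"
proof -
  have "nat (- (- int i - 1) - 1) = i" by simp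
  thus ?thesis using consistent[OF lim k i] by (simp add: omega_def)
qed

lemma seg_future:
  fixes w :: "nat \<Rightarrow> 'a::finite list"
  assumes lim: "\<And>N. \<forall>\<^sub>F k in sequentially. N \<le> length (w k)" and k: "k \<in> Iset w N" and n: "n \<le> N"
  shows "seg A (omega w) 0 n = word_prod A (drop (length (w k) - n) (w k))"
proof -
  have len: "N \<le> length (w k)" using Iset_props[OF lim, of N] k by blast
  have "map (\<lambda>i. omega w (0 + int i)) [0..<n] = take n (rev (w k))"
    by (rule nth_equalityI) (use len n omega_pos[OF lim k] in auto)
  thus ?thesis by (simp add: seg_word rev_take)
qed

lemma seg_past:
  fixes w :: "nat \<Rightarrow> 'a::finite list"
  assumes lim: "\<And>N. \<forall>\<^sub>F k in sequentially. N \<le> length (w k)" and k: "k \<in> Iset w N" and n: "n \<le> N"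
  shows "seg A (omega w) (- int n) n = word_prod A (take n (w k))"
proof -
  have len: "N \<le> length (w k)" using Iset_props[OF lim, of N] k by blast
  have "map (\<lambda>i. omega w (- int n + int i)) [0..<n] = rev (take n (w k))"
  proof (rule nth_equalityI)
    show "length (map (\<lambda>i. omega w (- int n + int i)) [0..<n]) = length (rev (take n (w k)))"
      using len n by simp
    fix i assume "i < length (map (\<lambda>i. omega w (- int n + int i)) [0..<n])"
    hence i: "i < n" by simp
    have eq: "- int n + int i = - int (n - 1 - i) - 1" using i by simp
    have "omega w (- int n + int i) = w k ! (n - 1 - i)"
      unfolding eq by (rule omega_neg[OF lim k]) (use i n in simp)
    thus "map (\<lambda>i. omega w (- int n + int i)) [0..<n] ! i = rev (take n (w k)) ! i"
      using i len n by (simp add: rev_nth)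
  qed
  thus ?thesis by (simp add: seg_word)
qed

lemma inf_le: fixes a :: "nat \<Rightarrow> real"
  assumes J: "infinite J" and a: "a \<longlonglongrightarrow> 0" and b: "\<And>k. k \<in> J \<Longrightarrow> x \<le> a k + c"
  shows "x \<le> c"
proof (rule ccontr)
  assume "\<not> x \<le> c"
  hence eps: "0 < x - c" by simp
  have "\<forall>\<^sub>F k in sequentially. a k < x - c" using order_tendstoD(2)[OF a eps] .
  then obtain K where K: "\<And>k. K \<le> k \<Longrightarrow> a k < x - c" unfolding eventually_sequentially by blast
  obtain k where k: "K \<le> k" "k \<in> J" using J unfolding infinite_nat_iff_unbounded_le by blast
  show False using K[OF k(1)] b[OF k(2)] by simp
qed

context dom2 begin

lemma ratio_le: assumes "norm u = 1" "det2 G \<noteq> 0"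
  shows "norm (G *v u) / s1 G \<le> rr G + dd u (wk G)"
  using norm_le_dd[OF assms] s1_pos[OF assms(2)] by (simp add: divide_le_eq)

lemma no_bad:
  fixes w :: "nat \<Rightarrow> 'n list"
  assumes lim: "\<And>N. \<forall>\<^sub>F k in sequentially. N \<le> length (w k)"
    and u: "norm u = 1"
    and H1: "(\<lambda>k. norm (word_prod A (w k) *v u) / s1 (word_prod A (w k))) \<longlonglongrightarrow> 0"
    and H2: "(\<lambda>k. norm (inv2 (word_prod A (w k)) *v u) / s1 (inv2 (word_prod A (w k)))) \<longlonglongrightarrow> 0"
  shows False
proof -
  let ?\<omega> = "omega w"
  have dw: "\<And>v. det2 (word_prod A v) \<noteq> 0" by (rule det2_word[OF detA])
  let ?c = "\<lambda>n. mu * (C * \<tau>^n / (1 - \<tau>))"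
  have ddF: "dd u (wk (seg A ?\<omega> 0 n)) \<le> ?c n" for n
  proof (rule inf_le[OF _ H1])
    show "infinite (Iset w n)" using Iset_props[OF lim, of n] by blast
    fix k assume k: "k \<in> Iset w n"
    let ?L = "length (w k)"
    have nL: "n \<le> ?L" using Iset_props[OF lim, of n] k by blast
    let ?G = "\<lambda>i. word_prod A (drop (?L - i) (w k))"
    let ?B = "\<lambda>i. A (w k ! (?L - Suc i))"
    have ch: "?G (Suc i) = ?B i ** ?G i" if "n \<le> i" "i < ?L" for i
    proof -
      have "drop (?L - Suc i) (w k) = w k ! (?L - Suc i) # drop (Suc (?L - Suc i)) (w k)"
        using that by (simp add: Cons_nth_drop_Suc)
      moreover have "Suc (?L - Suc i) = ?L - i" using that by simp
      ultimately show ?thesis by simp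
    qed
    have rG: "rr (?G i) \<le> C * \<tau>^i" if "n \<le> i" "i < ?L" for i
      using domw[of "drop (?L - i) (w k)"] that by simp
    have "dd u (wk (?G n)) \<le> norm (?G ?L *v u) / s1 (?G ?L) + ?c n"
      by (rule dd_bound_fin[of n ?L ?G ?B mu C \<tau> u])
         (use ch rG detA cond_le mu_nonneg dw tau Cpos u nL in auto)
    moreover have "?G n = seg A ?\<omega> 0 n" using seg_future[OF lim k, of n A] by simp
    ultimately show "dd u (wk (seg A ?\<omega> 0 n)) \<le> norm (word_prod A (w k) *v u) / s1 (word_prod A (w k)) + ?c n"
      by simp
  qed
  have Es: "Es ?\<omega> 0 u"
    unfolding Es_def
  proof (rule Lim_null_comparison[OF always_eventually[OF allI]])
    let ?g = "\<lambda>n. (C + mu * C / (1 - \<tau>)) * \<tau>^n"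
    show "?g \<longlonglongrightarrow> 0" using tau by (intro tendsto_mult_right_zero LIMSEQ_power_zero) auto
    fix n
    have "norm (seg A ?\<omega> 0 n *v u) / s1 (seg A ?\<omega> 0 n) \<le> rr (seg A ?\<omega> 0 n) + dd u (wk (seg A ?\<omega> 0 n))"
      by (rule ratio_le[OF u det_seg])
    also have "\<dots> \<le> C * \<tau>^n + ?c n" by (intro add_mono rr_seg ddF)
    also have "\<dots> = ?g n" by (simp add: algebra_simps)
    finally show "norm (norm (seg A ?\<omega> 0 n *v u) / s1 (seg A ?\<omega> 0 n)) \<le> ?g n"
      by (simp add: s1_nonneg)
  qed
  have ddP: "dd u (wk (inv2 (seg A ?\<omega> (- int n) n))) \<le> ?c n" for n
  proof (rule inf_le[OF _ H2])
    show "infinite (Iset w n)" using Iset_props[OF lim, of n] by blast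
    fix k assume k: "k \<in> Iset w n"
    let ?L = "length (w k)"
    have nL: "n \<le> ?L" using Iset_props[OF lim, of n] k by blast
    let ?G = "\<lambda>i. inv2 (word_prod A (take i (w k)))"
    let ?B = "\<lambda>i. inv2 (A (w k ! i))"
    have ch: "?G (Suc i) = ?B i ** ?G i" if "n \<le> i" "i < ?L" for i
    proof -
      have "take (Suc i) (w k) = take i (w k) @ [w k ! i]" using that by (simp add: take_Suc_conv_app_nth)
      hence "word_prod A (take (Suc i) (w k)) = word_prod A (take i (w k)) ** A (w k ! i)"
        by (simp add: word_prod_append)
      thus ?thesis by (simp add: inv2_mult dw detA)
    qed
    have rG: "rr (?G i) \<le> C * \<tau>^i" if "n \<le> i" "i < ?L" for i
      using domw[of "take i (w k)"] that by (simp add: rr_inv2 dw)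
    have "dd u (wk (?G n)) \<le> norm (?G ?L *v u) / s1 (?G ?L) + ?c n"
      by (rule dd_bound_fin[of n ?L ?G ?B mu C \<tau> u])
         (use ch rG detA cond_inv_le mu_nonneg dw det2_inv2 tau Cpos u nL in auto)
    moreover have "?G n = inv2 (seg A ?\<omega> (- int n) n)" using seg_past[OF lim k, of n A] by simp
    ultimately show "dd u (wk (inv2 (seg A ?\<omega> (- int n) n))) \<le> norm (inv2 (word_prod A (w k)) *v u) / s1 (inv2 (word_prod A (w k))) + ?c n"
      by simp
  qed
  have Eu: "Eu ?\<omega> 0 u"
    unfolding Eu_def
  proof (rule Lim_null_comparison[OF always_eventually[OF allI]])
    let ?g = "\<lambda>n. (C + mu * C / (1 - \<tau>)) * \<tau>^n"
    show "?g \<longlonglongrightarrow> 0" using tau by (intro tendsto_mult_right_zero LIMSEQ_power_zero) auto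
    fix n
    let ?P = "inv2 (seg A ?\<omega> (- int n) n)"
    have dP: "det2 ?P \<noteq> 0" by (simp add: det2_inv2 det_seg)
    have "norm (?P *v u) / s1 ?P \<le> rr ?P + dd u (wk ?P)"
      by (rule ratio_le[OF u dP])
    also have "\<dots> \<le> C * \<tau>^n + ?c n" by (intro add_mono ddP) (simp add: rr_inv2 det_seg rr_seg)
    also have "\<dots> = ?g n" by (simp add: algebra_simps)
    finally show "norm (norm (inv2 (seg A ?\<omega> (0 - int n) n) *v u) / s1 (inv2 (seg A ?\<omega> (0 - int n) n))) \<le> ?g n"
      by (simp add: s1_nonneg)
  qed
  have "u \<noteq> 0" using u by auto
  thus False using exact Es Eu by blast
qed

end

definition tr2 :: "real^2^2 \<Rightarrow> real" where "tr2 G = G$1$1 + G$2$2"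

lemma cayley: "G ** G = tr2 G *\<^sub>R G - det2 G *\<^sub>R mat 1"
  unfolding mat2_eq mm2 by (simp add: tr2_def det2_def mat_def algebra_simps power2_eq_square)

lemma adj2_tr: "adj2 G = tr2 G *\<^sub>R mat 1 - G"
  unfolding mat2_eq by (simp add: adj2_def tr2_def mat_def)

lemma det2_scale: "det2 (c *\<^sub>R G) = c^2 * det2 G"
  by (simp add: det2_def algebra_simps power2_eq_square)

lemma adj2_scale: "adj2 (c *\<^sub>R G) = c *\<^sub>R adj2 G"
  unfolding mat2_eq by (simp add: adj2_def)

lemma inv2_adj: "inv2 G = (1 / det2 G) *\<^sub>R adj2 G" by (simp add: inv2_def)

lemma mat_pow_0: "mat_pow M 0 = mat 1" by (simp add: mat_pow_def)
lemma mat_pow_Suc: "mat_pow M (Suc k) = M ** mat_pow M k" by (simp add: mat_pow_def)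

lemma mat1_ne0: "(mat 1 :: real^2^2) \<noteq> 0"
proof
  assume "(mat 1 :: real^2^2) = 0"
  hence "(mat 1 :: real^2^2) $ 1 $ 1 = 0" by simp
  thus False by (simp add: mat_def)
qed

lemma det2_pow: "det2 (mat_pow M k) = det2 M ^ k"
  by (induction k) (simp_all add: mat_pow_0 mat_pow_Suc det2_mult det2_one)

lemma nilp_props: assumes "nilpotent_mat (M::real^2^2)" "M \<noteq> 0" shows "det2 M = 0" "tr2 M = 0"
proof -
  obtain k where k: "mat_pow M k = 0" using assms(1) by (auto simp: nilpotent_mat_def)
  have "k \<noteq> 0"
  proof
    assume "k = 0"
    hence "mat_pow M k = mat 1" by (simp add: mat_pow_0)
    thus False using k mat1_ne0 by simp
  qed
  have "det2 M ^ k = 0" using det2_pow[of M k] k by (simp add: det2_def)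
  thus d: "det2 M = 0" by simp
  have sq: "M ** M = tr2 M *\<^sub>R M" using cayley[of M] d by simp
  have pw: "mat_pow M (Suc j) = tr2 M ^ j *\<^sub>R M" for j
  proof (induction j)
    case 0 then show ?case by (simp add: mat_pow_Suc mat_pow_0)
  next
    case (Suc j)
    have "mat_pow M (Suc (Suc j)) = M ** (tr2 M ^ j *\<^sub>R M)" by (simp only: mat_pow_Suc[of M "Suc j"] Suc.IH)
    also have "\<dots> = tr2 M ^ j *\<^sub>R (M ** M)" by (rule scaleR_mm_right)
    also have "\<dots> = tr2 M ^ Suc j *\<^sub>R M" by (simp add: sq)
    finally show ?case .
  qed
  obtain j where j: "k = Suc j" using \<open>k \<noteq> 0\<close> not0_implies_Suc by blast
  have "tr2 M ^ j *\<^sub>R M = 0" using k pw[of j] j by simp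
  thus "tr2 M = 0" using assms(2) by simp
qed

lemma linear_mv: "linear (\<lambda>X::real^2^2. X *v v)"
  by (rule linearI) (simp_all add: matrix_vector_mult_add_rdistrib scaleR_matrix_vector_assoc)

lemma tendsto_mv: "X \<longlonglongrightarrow> (M::real^2^2) \<Longrightarrow> (\<lambda>k. X k *v v) \<longlonglongrightarrow> M *v (v::real^2)"
  by (rule bounded_linear.tendsto[OF linear_conv_bounded_linear[THEN iffD1, OF linear_mv]])

lemma tendsto_tr2: assumes "X \<longlonglongrightarrow> (M::real^2^2)" shows "(\<lambda>k. tr2 (X k)) \<longlonglongrightarrow> tr2 M"
  unfolding tr2_def by (intro tendsto_add tendsto_vec_nth assms)

lemma tendsto_adj2: assumes "X \<longlonglongrightarrow> (M::real^2^2)" shows "(\<lambda>k. adj2 (X k)) \<longlonglongrightarrow> adj2 M"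
  unfolding adj2_tr by (intro tendsto_diff tendsto_scaleR tendsto_tr2 tendsto_const assms)

lemma ratio_lim:
  assumes Y: "Y \<longlonglongrightarrow> (N::real^2^2)" and Nu: "N *v u = 0" and Ny: "N *v y \<noteq> 0" and y: "norm y = 1"
  shows "(\<lambda>k. norm (Y k *v u) / s1 (Y k)) \<longlonglongrightarrow> 0"
proof -
  have a: "(\<lambda>k. norm (Y k *v u)) \<longlonglongrightarrow> 0" using tendsto_norm[OF tendsto_mv[OF Y, of u]] Nu by simp
  have b: "(\<lambda>k. norm (Y k *v y)) \<longlonglongrightarrow> norm (N *v y)" by (intro tendsto_norm tendsto_mv Y)
  have bp: "0 < norm (N *v y)" using Ny by simp
  have g: "(\<lambda>k. norm (Y k *v u) / norm (Y k *v y)) \<longlonglongrightarrow> 0 / norm (N *v y)"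
    by (rule tendsto_divide[OF a b]) (use Ny in simp)
  have ev: "\<forall>\<^sub>F k in sequentially. 0 < norm (Y k *v y)" using order_tendstoD(1)[OF b bp] .
  show ?thesis
  proof (rule Lim_null_comparison[of _ "\<lambda>k. norm (Y k *v u) / norm (Y k *v y)"])
    show "\<forall>\<^sub>F k in sequentially. norm (norm (Y k *v u) / s1 (Y k)) \<le> norm (Y k *v u) / norm (Y k *v y)"
      using ev
    proof eventually_elim
      case (elim k)
      have "norm (Y k *v y) \<le> s1 (Y k)" by (rule s1_ge[OF y])
      moreover have "0 < s1 (Y k) * norm (Y k *v y)"
      proof -
        have p: "0 < norm (Y k *v y)" using elim .
        hence "0 < s1 (Y k)" using calculation by linarith
        thus ?thesis using p by (rule mult_pos_pos)
      qed
      ultimately have "norm (Y k *v u) / s1 (Y k) \<le> norm (Y k *v u) / norm (Y k *v y)"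
        by (intro divide_left_mono) auto
      thus ?case by (simp add: s1_nonneg)
    qed
    show "(\<lambda>k. norm (Y k *v u) / norm (Y k *v y)) \<longlonglongrightarrow> 0" using g by simp
  qed
qed

lemma ratio_scale: "c \<noteq> 0 \<Longrightarrow> norm ((c *\<^sub>R Y) *v u) / s1 (c *\<^sub>R Y) = norm (Y *v u) / s1 Y"
  by (simp add: scaleR_matrix_vector_assoc[symmetric] s1_scale)

lemma dom_conv:
  fixes A :: "'n::finite \<Rightarrow> real^2^2"
  assumes GL: "\<And>i. invertible (A i)" and dom: "dominated A"
  shows "\<exists>C \<tau>. dom2 A C \<tau>"
proof -
  obtain C \<tau> where C: "C > 0" "0 < \<tau>" "\<tau> < 1"
    and d: "\<And>w. sv2 (word_prod A w) \<le> C * \<tau> ^ length w * sv1 (word_prod A w)"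
    using dom unfolding dominated_def by blast
  have detA: "\<And>i. det2 (A i) \<noteq> 0" using GL invertible_det2 by blast
  have "dom2 A C \<tau>"
  proof
    show "\<And>i. det2 (A i) \<noteq> 0" by (rule detA)
    show "0 < C" "0 < \<tau>" "\<tau> < 1" using C by auto
    fix w
    have p: "0 < s1 (word_prod A w)" by (rule s1_pos[OF det2_word[OF detA]])
    have "s2 (word_prod A w) \<le> C * \<tau> ^ length w * s1 (word_prod A w)"
      using d[of w] by (simp add: sv1_eq sv2_eq)
    thus "rr (word_prod A w) \<le> C * \<tau> ^ length w" using p by (simp add: rr_def pos_divide_le_eq)
  qed
  thus ?thesis by blast
qed

lemma exists_nonkernel: assumes "(M::real^2^2) \<noteq> 0" shows "\<exists>y. norm y = 1 \<and> M *v y \<noteq> 0"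
proof -
  obtain y0 where y0: "M *v y0 \<noteq> 0" using assms matrix_eq[of M 0] by auto
  hence "y0 \<noteq> 0" by auto
  let ?y = "(1 / norm y0) *\<^sub>R y0"
  have "norm ?y = 1" using \<open>y0 \<noteq> 0\<close> by simp
  moreover have "M *v ?y \<noteq> 0" using y0 \<open>y0 \<noteq> 0\<close> by (simp add: matrix_vector_mult_scaleR)
  ultimately show ?thesis by blast
qed

lemma mv_neg: "(- M) *v v = - ((M::real^2^2) *v (v::real^2))"
  by (simp add: mv2 vec2_eq)

lemma part1:
  fixes A :: "'n::finite \<Rightarrow> real^2^2"
  assumes GL: "\<And>i. invertible (A i)" and dom: "dominated A"
    and Mcl: "M \<in> closure {c *\<^sub>R word_prod A w | c w. True}" and nil: "nilpotent_mat M"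
  shows "M = 0"
proof (rule ccontr)
  assume Mne: "M \<noteq> 0"
  obtain C \<tau> where D: "dom2 A C \<tau>" using dom_conv[OF GL dom] by blast
  interpret dom2 A C \<tau> by (rule D)
  have dM: "det2 M = 0" and tM: "tr2 M = 0" using nilp_props[OF nil Mne] by auto
  have MM: "M ** M = 0" using cayley[of M] dM tM by simp
  obtain y where y: "norm y = 1" "M *v y \<noteq> 0" using exists_nonkernel[OF Mne] by blast
  let ?u0 = "M *v y"
  have Mu0: "M *v ?u0 = 0" by (simp add: matrix_vector_mul_assoc MM)
  let ?u = "(1 / norm ?u0) *\<^sub>R ?u0"
  have u: "norm ?u = 1" using y(2) by simp
  have Mu: "M *v ?u = 0" by (simp add: matrix_vector_mult_scaleR Mu0)
  obtain X where X: "\<And>n. X n \<in> {c *\<^sub>R word_prod A w | c w. True}" "X \<longlonglongrightarrow> M"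
    using Mcl unfolding closure_sequential by blast
  have "\<forall>n. \<exists>p. X n = fst p *\<^sub>R word_prod A (snd p)" using X(1) by fastforce
  then obtain p where p: "\<And>n. X n = fst (p n) *\<^sub>R word_prod A (snd (p n))" by metis
  define c where "c n = fst (p n)" for n
  define w where "w n = snd (p n)" for n
  have cw: "X n = c n *\<^sub>R word_prod A (w n)" for n by (simp add: p c_def w_def)
  have dw: "\<And>v. det2 (word_prod A v) \<noteq> 0" by (rule det2_word[OF detA])
  show False
  proof (cases "\<forall>N. \<forall>\<^sub>F k in sequentially. N \<le> length (w k)")
    case True
    have evc: "\<forall>\<^sub>F k in sequentially. c k \<noteq> 0"
      using tendsto_imp_eventually_ne[OF X(2) Mne] by eventually_elim (auto simp: cw)
    have H1: "(\<lambda>k. norm (word_prod A (w k) *v ?u) / s1 (word_prod A (w k))) \<longlonglongrightarrow> 0"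
    proof (rule Lim_transform_eventually[OF ratio_lim[OF X(2) Mu y(2) y(1)]])
      show "\<forall>\<^sub>F k in sequentially. norm (X k *v ?u) / s1 (X k) = norm (word_prod A (w k) *v ?u) / s1 (word_prod A (w k))"
        using evc by eventually_elim (simp add: cw ratio_scale)
    qed
    have adjM: "adj2 M = - M" by (simp add: adj2_tr tM)
    have aMu: "adj2 M *v ?u = 0" by (simp add: adjM Mu mv_neg)
    have aMy: "adj2 M *v y \<noteq> 0" using y(2) by (simp add: adjM mv_neg)
    have H2: "(\<lambda>k. norm (inv2 (word_prod A (w k)) *v ?u) / s1 (inv2 (word_prod A (w k)))) \<longlonglongrightarrow> 0"
    proof (rule Lim_transform_eventually[OF ratio_lim[OF tendsto_adj2[OF X(2)] aMu aMy y(1)]])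
      show "\<forall>\<^sub>F k in sequentially. norm (adj2 (X k) *v ?u) / s1 (adj2 (X k)) = norm (inv2 (word_prod A (w k)) *v ?u) / s1 (inv2 (word_prod A (w k)))"
        using evc
      proof eventually_elim
        case (elim k)
        have "norm (adj2 (X k) *v ?u) / s1 (adj2 (X k)) = norm (adj2 (word_prod A (w k)) *v ?u) / s1 (adj2 (word_prod A (w k)))"
          by (simp add: cw adj2_scale ratio_scale elim)
        also have "\<dots> = norm (inv2 (word_prod A (w k)) *v ?u) / s1 (inv2 (word_prod A (w k)))"
          unfolding inv2_adj by (rule ratio_scale[symmetric]) (simp add: dw)
        finally show ?case .
      qed
    qed
    show False by (rule no_bad[OF _ u H1 H2]) (use True in blast)
  next
    case False
    then obtain N where N: "\<not> (\<forall>\<^sub>F k in sequentially. N \<le> length (w k))" by blast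
    let ?K = "{k. length (w k) < N}"
    have infK: "infinite ?K"
    proof
      assume "finite ?K"
      then obtain K0 where "?K \<subseteq> {..<K0}" using finite_nat_bounded by blast
      hence "\<forall>k\<ge>K0. N \<le> length (w k)" by (auto simp: subset_eq not_less[symmetric])
      hence "\<forall>\<^sub>F k in sequentially. N \<le> length (w k)" unfolding eventually_sequentially by blast
      with N show False by blast
    qed
    have "w ` ?K \<subseteq> {xs. set xs \<subseteq> UNIV \<and> length xs \<le> N}" by auto
    moreover have "finite {xs. set xs \<subseteq> (UNIV::'n set) \<and> length xs \<le> N}"
      by (rule finite_lists_length_le) simp
    ultimately have fin: "finite (w ` ?K)" by (rule finite_subset)
    obtain w0 where w0: "infinite (w -` {w0} \<inter> ?K)" using inf_img_fin_dom'[OF fin infK] by blast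
    let ?B = "word_prod A w0"
    let ?T = "range (\<lambda>c. c *\<^sub>R ?B)"
    have cT: "closed ?T" using closed_span[of "{?B}"] by (simp add: span_singleton)
    have "M \<in> ?T"
    proof (rule ccontr)
      assume "M \<notin> ?T"
      hence "\<forall>\<^sub>F k in sequentially. X k \<in> - ?T"
        using cT by (intro topological_tendstoD[OF X(2)]) auto
      then obtain K0 where K0: "\<And>k. K0 \<le> k \<Longrightarrow> X k \<in> - ?T" unfolding eventually_sequentially by blast
      obtain k where k: "K0 \<le> k" "k \<in> w -` {w0} \<inter> ?K" using w0 unfolding infinite_nat_iff_unbounded_le by blast
      have "X k \<in> ?T" using k(2) by (auto simp: cw)
      thus False using K0[OF k(1)] by simp
    qed
    then obtain a where a: "M = a *\<^sub>R ?B" by blast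
    have "a^2 * det2 ?B = 0" using dM a det2_scale by simp
    hence "a = 0" using dw[of w0] by simp
    thus False using a Mne by simp
  qed
qed

lemma part2:
  fixes A :: "'n::finite \<Rightarrow> real^2^2"
  assumes GL: "\<And>i. invertible (A i)" and dom: "dominated A"
    and Mcl: "M \<in> closure {c *\<^sub>R word_prod A w | c w. True}" and r: "rank M = 1"
  shows "\<exists>c P. c \<noteq> 0 \<and> P ** P = P \<and> rank P = 1 \<and> M = c *\<^sub>R P"
proof -
  have Mne: "M \<noteq> 0" using r rank_eq_0[of M] by auto
  obtain x where x: "x \<noteq> 0" "M *v x = 0"
    using matrix_nonfull_linear_equations_eq[of M] r by auto
  have dM: "det2 M = 0"
  proof (rule ccontr)
    assume "det2 M \<noteq> 0"
    hence "x = inv2 M *v (M *v x)" by (simp add: inv2_apply)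
    thus False using x by simp
  qed
  let ?t = "tr2 M"
  have t: "?t \<noteq> 0"
  proof
    assume t0: "?t = 0"
    have "M ** M = 0" using cayley[of M] dM t0 by simp
    hence "mat_pow M 2 = 0" by (simp add: mat_pow_def numeral_2_eq_2)
    hence "nilpotent_mat M" unfolding nilpotent_mat_def by blast
    hence "M = 0" by (rule part1[OF GL dom Mcl])
    thus False using Mne by simp
  qed
  let ?P = "(1 / ?t) *\<^sub>R M"
  have MM: "M ** M = ?t *\<^sub>R M" using cayley[of M] dM by simp
  have PP: "?P ** ?P = ?P"
    using t by (simp add: scaleR_mm_left scaleR_mm_right MM)
  have Pne: "?P \<noteq> 0" using t Mne by simp
  have "?P *v x = 0" using x by (simp add: scaleR_matrix_vector_assoc[symmetric])
  hence "rank ?P \<noteq> 2" using matrix_nonfull_linear_equations_eq[of ?P] x by auto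
  moreover have "rank ?P \<le> 2" using rank_bound[of ?P] by simp
  moreover have "rank ?P \<noteq> 0" using Pne rank_eq_0 by blast
  ultimately have rP: "rank ?P = 1" by linarith
  have "M = ?t *\<^sub>R ?P" using t by simp
  thus ?thesis using t PP rP by blast
qed

theorem mainTheorem9:
  fixes A :: "'n::finite \<Rightarrow> real^2^2"
  assumes GL: "\<And>i. invertible (A i)"
    and dom: "dominated A"
  shows "(\<forall>M \<in> closure {c *\<^sub>R word_prod A w | c w. True}.
            nilpotent_mat M \<longrightarrow> M = 0)
       \<and> (\<forall>M \<in> closure {c *\<^sub>R word_prod A w | c w. True}.
            rank M = 1 \<longrightarrow>
              (\<exists>c P. c \<noteq> 0 \<and> P ** P = P \<and> rank P = 1 \<and> M = c *\<^sub>R P))"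
  using part1[OF GL dom] part2[OF GL dom] by blast

end
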